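(* Let $n\ge 1$, let $U$ be a unitary on $n$ compute qubits, let $\rho$ be an arbitrary $n$-qubit density matrix, and let $\mathcal{E}(\sigma)=\sum_i E_i\sigma E_i^\dagger$ be a noise map acting on the compute qubits only, each of whose Kraus operators $E_i$ has weight one (acts nontrivially on at most one qubit, possibly different qubits for different $i$). Then there exist two layers of checks ($m=2$), i.e. $n$-qubit unitaries $\tilde C_{1,k},\tilde C_{2,k}$, $k=1,2$, with $\tilde C_{2,k}U\tilde C_{1,k}=U$, such that, whenever the probability of obtaining outcome $0$ on both ancillas in the Pauli check sandwiching protocol (with noise $\mathcal{E}$ immediately after $U$) is nonzero, the postselected state $\rho_m$ satisfies $F(\rho_m,U\rho U^\dagger)=1$. Moreover, the controlled operations $C_{2,1},C_{2,2}$ can be implemented with a total of $2n$ CNOT gates (together with single-qubit gates).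
   Context: The $m$-layer Pauli check sandwiching protocol: for each $k$, let $C_{j,k}=\tilde C_{j,k}\otimes|1\rangle\langle 1|_k+\mathbb{I}\otimes|0\rangle\langle 0|_k$ ($j=1,2$) be the controlled unitary with control on ancilla $k$ and target the compute qubits. Start with the compute qubits in $\rho$ and $m$ ancillas in $|0\rangle$; apply a Hadamard to every ancilla; apply $C_{1,m},\dots,C_{1,1}$; apply $U$; apply $\mathcal{E}$ to the compute qubits; apply $C_{2,1},\dots,C_{2,m}$; apply a Hadamard to every ancilla; measure all ancillas in the computational basis and keep only runs where all outcomes are $0$. $\rho_m$ is the renormalized resulting state of the compute qubits. Fidelity is $F(\rho,\omega)=\left(\operatorname{tr}\sqrt{\sqrt{\rho}\,\omega\sqrt{\rho}}\right)^2$. *)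

theory Defs
  imports "Jordan_Normal_Form.Matrix" Complex_Main
begin

definition adj :: "complex mat \<Rightarrow> complex mat" where
  "adj A = mat (dim_col A) (dim_row A) (\<lambda>(i,j). cnj (A $$ (j,i)))"

definition tr :: "complex mat \<Rightarrow> complex" where
  "tr A = (\<Sum>i<dim_row A. A $$ (i,i))"

definition unitary_mat :: "nat \<Rightarrow> complex mat \<Rightarrow> bool" where
  "unitary_mat d U \<longleftrightarrow> U \<in> carrier_mat d d \<and> adj U * U = 1\<^sub>m d \<and> U * adj U = 1\<^sub>m d"

definition psd :: "nat \<Rightarrow> complex mat \<Rightarrow> bool" where
  "psd d A \<longleftrightarrow> A \<in> carrier_mat d d \<and> adj A = A \<and>
     (\<forall>v :: nat \<Rightarrow> complex. 0 \<le> Re (\<Sum>i<d. \<Sum>j<d. cnj (v i) * A $$ (i,j) * v j))"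

definition density :: "nat \<Rightarrow> complex mat \<Rightarrow> bool" where
  "density d \<rho> \<longleftrightarrow> psd d \<rho> \<and> tr \<rho> = 1"

text \<open>The (unique) positive semidefinite square root.\<close>
definition msqrt :: "complex mat \<Rightarrow> complex mat" where
  "msqrt A = (THE B. psd (dim_row A) B \<and> B * B = A)"

definition fidelity :: "complex mat \<Rightarrow> complex mat \<Rightarrow> complex" where
  "fidelity \<rho> \<omega> = (tr (msqrt (msqrt \<rho> * \<omega> * msqrt \<rho>)))\<^sup>2"

text \<open>Kronecker product; index (i,k) of A \<otimes> B is i * dim B + k (qubit 0 most significant).\<close>
definition kron :: "complex mat \<Rightarrow> complex mat \<Rightarrow> complex mat" where
  "kron A B = mat (dim_row A * dim_row B) (dim_col A * dim_col B)
     (\<lambda>(i,j). A $$ (i div dim_row B, j div dim_col B) * B $$ (i mod dim_row B, j mod dim_col B))"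

text \<open>Operator A (2x2) acting on qubit q (0-based) of an N-qubit register.\<close>
definition on_qubit :: "nat \<Rightarrow> nat \<Rightarrow> complex mat \<Rightarrow> complex mat" where
  "on_qubit N q A = kron (1\<^sub>m (2^q)) (kron A (1\<^sub>m (2^(N - q - 1))))"

definition weight_le1 :: "nat \<Rightarrow> complex mat \<Rightarrow> bool" where
  "weight_le1 n E \<longleftrightarrow> (\<exists>q<n. \<exists>A \<in> carrier_mat 2 2. E = on_qubit n q A)"

definition kraus_channel :: "nat \<Rightarrow> complex mat list \<Rightarrow> bool" where
  "kraus_channel d Ks \<longleftrightarrow> (\<forall>E \<in> set Ks. E \<in> carrier_mat d d) \<and>
     foldr (\<lambda>E acc. adj E * E + acc) Ks (0\<^sub>m d d) = 1\<^sub>m d"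

definition apply_kraus :: "complex mat list \<Rightarrow> complex mat \<Rightarrow> complex mat" where
  "apply_kraus Ks \<sigma> = foldr (\<lambda>E acc. E * \<sigma> * adj E + acc) Ks (0\<^sub>m (dim_row \<sigma>) (dim_col \<sigma>))"

definition proj0 :: "complex mat" where
  "proj0 = mat 2 2 (\<lambda>(i,j). if i = 0 \<and> j = 0 then 1 else 0)"
definition proj1 :: "complex mat" where
  "proj1 = mat 2 2 (\<lambda>(i,j). if i = 1 \<and> j = 1 then 1 else 0)"
definition pauliX :: "complex mat" where
  "pauliX = mat 2 2 (\<lambda>(i,j). if i \<noteq> j then 1 else 0)"
definition hadamard :: "complex mat" where
  "hadamard = mat 2 2 (\<lambda>(i,j). (if i = 1 \<and> j = 1 then -1 else 1) / complex_of_real (sqrt 2))"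

primrec hpow :: "nat \<Rightarrow> complex mat" where
  "hpow 0 = 1\<^sub>m 1"
| "hpow (Suc m) = kron hadamard (hpow m)"

text \<open>Register: n compute qubits (first tensor factor) and m ancillas (second factor);
  ancilla k (1 \<le> k \<le> m) is qubit k-1 of the ancilla register.\<close>
definition ctrl :: "nat \<Rightarrow> nat \<Rightarrow> nat \<Rightarrow> complex mat \<Rightarrow> complex mat" where
  "ctrl n m k Ct = kron Ct (on_qubit m (k - 1) proj1) + kron (1\<^sub>m (2^n)) (on_qubit m (k - 1) proj0)"

text \<open>layer1 gives C_{1,1} * ... * C_{1,m} (so C_{1,m} is applied first);
  layer2 gives C_{2,m} * ... * C_{2,1} (so C_{2,1} is applied first).\<close>
definition layer1_full :: "nat \<Rightarrow> nat \<Rightarrow> (nat \<Rightarrow> complex mat) \<Rightarrow> complex mat" where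
  "layer1_full n m C = foldr (\<lambda>k acc. ctrl n m k (C k) * acc) [1..<Suc m] (1\<^sub>m (2^n * 2^m))"

definition layer2_full :: "nat \<Rightarrow> nat \<Rightarrow> (nat \<Rightarrow> complex mat) \<Rightarrow> complex mat" where
  "layer2_full n m C = foldr (\<lambda>k acc. acc * ctrl n m k (C k)) [1..<Suc m] (1\<^sub>m (2^n * 2^m))"

definition anc_zero :: "nat \<Rightarrow> complex mat" where
  "anc_zero m = mat (2^m) (2^m) (\<lambda>(i,j). if i = 0 \<and> j = 0 then 1 else 0)"

text \<open>Unnormalized state of the whole register after projecting all ancillas onto |0>.\<close>
definition psp_final :: "nat \<Rightarrow> nat \<Rightarrow> (nat \<Rightarrow> complex mat) \<Rightarrow> (nat \<Rightarrow> complex mat)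
    \<Rightarrow> complex mat \<Rightarrow> complex mat list \<Rightarrow> complex mat \<Rightarrow> complex mat" where
  "psp_final n m C1 C2 U Ks \<rho> =
    (let Iw = 1\<^sub>m (2^n);
         Hd = kron Iw (hpow m);
         \<sigma>0 = kron \<rho> (anc_zero m);
         V1 = kron U (1\<^sub>m (2^m)) * layer1_full n m C1 * Hd;
         \<sigma>1 = V1 * \<sigma>0 * adj V1;
         \<sigma>2 = apply_kraus (map (\<lambda>E. kron E (1\<^sub>m (2^m))) Ks) \<sigma>1;
         V2 = Hd * layer2_full n m C2;
         \<sigma>3 = V2 * \<sigma>2 * adj V2;
         P = kron Iw (anc_zero m)
     in P * \<sigma>3 * P)"

definition ptrace_anc :: "nat \<Rightarrow> nat \<Rightarrow> complex mat \<Rightarrow> complex mat" where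
  "ptrace_anc n m \<sigma> = mat (2^n) (2^n) (\<lambda>(i,j). \<Sum>a<2^m. \<sigma> $$ (i * 2^m + a, j * 2^m + a))"

definition psp_prob :: "nat \<Rightarrow> nat \<Rightarrow> (nat \<Rightarrow> complex mat) \<Rightarrow> (nat \<Rightarrow> complex mat)
    \<Rightarrow> complex mat \<Rightarrow> complex mat list \<Rightarrow> complex mat \<Rightarrow> complex" where
  "psp_prob n m C1 C2 U Ks \<rho> = tr (psp_final n m C1 C2 U Ks \<rho>)"

definition psp_state :: "nat \<Rightarrow> nat \<Rightarrow> (nat \<Rightarrow> complex mat) \<Rightarrow> (nat \<Rightarrow> complex mat)
    \<Rightarrow> complex mat \<Rightarrow> complex mat list \<Rightarrow> complex mat \<Rightarrow> complex mat" where
  "psp_state n m C1 C2 U Ks \<rho> =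
     (1 / psp_prob n m C1 C2 U Ks \<rho>) \<cdot>\<^sub>m ptrace_anc n m (psp_final n m C1 C2 U Ks \<rho>)"

datatype gate = CNOT nat nat | G1 nat "complex mat"

fun gate_ok :: "nat \<Rightarrow> gate \<Rightarrow> bool" where
  "gate_ok N (CNOT c t) \<longleftrightarrow> c < N \<and> t < N \<and> c \<noteq> t"
| "gate_ok N (G1 q A) \<longleftrightarrow> q < N \<and> unitary_mat 2 A"

fun gate_mat :: "nat \<Rightarrow> gate \<Rightarrow> complex mat" where
  "gate_mat N (CNOT c t) = on_qubit N c proj0 + on_qubit N c proj1 * on_qubit N t pauliX"
| "gate_mat N (G1 q A) = on_qubit N q A"

text \<open>Gates are applied in list order (the first list element acts first).\<close>
primrec circuit_mat :: "nat \<Rightarrow> gate list \<Rightarrow> complex mat" where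
  "circuit_mat N [] = 1\<^sub>m (2^N)"
| "circuit_mat N (g # gs) = circuit_mat N gs * gate_mat N g"

definition is_cnot :: "gate \<Rightarrow> bool" where
  "is_cnot g = (case g of CNOT _ _ \<Rightarrow> True | G1 _ _ \<Rightarrow> False)"

definition cnot_count :: "gate list \<Rightarrow> nat" where
  "cnot_count gs = length (filter is_cnot gs)"

end

theory Submission
  imports Defs "Jordan_Normal_Form.Spectral_Radius"
begin

lemma sum_split_mult: "(\<Sum>k<(a::nat)*b. f k) = (\<Sum>x<a. \<Sum>y<b. f (x*b+y))"
proof (induction a)
  case 0 then show ?case by simp
next
  case (Suc a)
  have "{..<Suc a * b} = {..<a*b} \<union> {a*b..<a*b+b}" by auto
  hence "(\<Sum>k<Suc a*b. f k) = (\<Sum>k<a*b. f k) + (\<Sum>k\<in>{a*b..<a*b+b}. f k)"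
    by (simp add: sum.union_disjoint ivl_disj_int)
  also have "(\<Sum>k\<in>{a*b..<a*b+b}. f k) = (\<Sum>y<b. f (a*b+y))"
  proof -
    have "(\<Sum>k\<in>{a*b..<a*b+b}. f k) = (\<Sum>k\<in>{0+a*b..<b+a*b}. f k)" by (simp add: add.commute)
    also have "\<dots> = (\<Sum>y\<in>{0..<b}. f (y + a*b))" by (rule sum.shift_bounds_nat_ivl)
    finally show ?thesis by (simp add: atLeast0LessThan add.commute)
  qed
  finally show ?case using Suc by simp
qed

lemma kron_dims[simp]: "dim_row (kron A B) = dim_row A * dim_row B" "dim_col (kron A B) = dim_col A * dim_col B"
  by (auto simp: kron_def)

lemma kron_carrier[simp,intro]: "A \<in> carrier_mat a b \<Longrightarrow> B \<in> carrier_mat c d \<Longrightarrow> kron A B \<in> carrier_mat (a*c) (b*d)"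
  unfolding carrier_mat_def by simp

lemma kron_index: "i < dim_row A * dim_row B \<Longrightarrow> j < dim_col A * dim_col B \<Longrightarrow>
  kron A B $$ (i,j) = A $$ (i div dim_row B, j div dim_col B) * B $$ (i mod dim_row B, j mod dim_col B)"
  by (simp add: kron_def)

lemma div_mod_lt: "i < a * (b::nat) \<Longrightarrow> i div b < a \<and> i mod b < b"
proof -
  assume i: "i < a * b"
  then have "b > 0" by (cases b) auto
  then show ?thesis using i by (simp add: less_mult_imp_div_less mult.commute)
qed

lemma kron_mult:
  assumes "dim_col A = dim_row C" "dim_col B = dim_row D"
  shows "kron A B * kron C D = kron (A * C) (B * D)"
proof (rule eq_matI)
  fix i j assume i: "i < dim_row (kron (A * C) (B * D))" and j: "j < dim_col (kron (A * C) (B * D))"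
  let ?rb = "dim_row B" let ?cd = "dim_col D" let ?cb = "dim_col B" let ?ca = "dim_col A"
  have i': "i < dim_row A * ?rb" and j': "j < dim_col C * ?cd" using i j by auto
  from div_mod_lt[OF i'] div_mod_lt[OF j'] have ii: "i div ?rb < dim_row A" "i mod ?rb < ?rb"
    and jj: "j div ?cd < dim_col C" "j mod ?cd < ?cd" by auto
  have "(kron A B * kron C D) $$ (i,j) = (\<Sum>k<?ca * ?cb. kron A B $$ (i,k) * kron C D $$ (k,j))"
  proof -
    have "(kron A B * kron C D) $$ (i,j) = row (kron A B) i \<bullet> col (kron C D) j" using i' j' by simp
    also have "\<dots> = (\<Sum>k<?ca * ?cb. kron A B $$ (i,k) * kron C D $$ (k,j))"
      unfolding scalar_prod_def using assms i' j' by (intro sum.cong) (auto simp: atLeast0LessThan)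
    finally show ?thesis .
  qed
  also have "\<dots> = (\<Sum>x<?ca. \<Sum>y<?cb. kron A B $$ (i,x*?cb+y) * kron C D $$ (x*?cb+y,j))"
    by (rule sum_split_mult)
  also have "\<dots> = (\<Sum>x<?ca. \<Sum>y<?cb. (A $$ (i div ?rb, x) * C $$ (x, j div ?cd)) * (B $$ (i mod ?rb, y) * D $$ (y, j mod ?cd)))"
  proof (intro sum.cong refl)
    fix x y assume x: "x \<in> {..<?ca}" and y: "y \<in> {..<?cb}"
    have k: "x*?cb+y < ?ca * ?cb" using x y
    proof -
      have "x*?cb+y < Suc x * ?cb" using y by simp
      also have "\<dots> \<le> ?ca * ?cb" using x by (intro mult_le_mono1) simp
      finally show ?thesis .
    qed
    then show "kron A B $$ (i,x*?cb+y) * kron C D $$ (x*?cb+y,j) = (A $$ (i div ?rb, x) * C $$ (x, j div ?cd)) * (B $$ (i mod ?rb, y) * D $$ (y, j mod ?cd))"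
      using i' j' y assms by (simp add: kron_index)
  qed
  also have "\<dots> = (\<Sum>x<?ca. A $$ (i div ?rb, x) * C $$ (x, j div ?cd)) * (\<Sum>y<?cb. B $$ (i mod ?rb, y) * D $$ (y, j mod ?cd))"
    by (simp add: sum_product)
  also have "\<dots> = kron (A * C) (B * D) $$ (i,j)"
    using i' j' ii jj assms by (simp add: scalar_prod_def atLeast0LessThan kron_index)
  finally show "(kron A B * kron C D) $$ (i,j) = kron (A * C) (B * D) $$ (i,j)" .
qed (use assms in auto)

lemma mod_mult_div: "0 < (c::nat) \<Longrightarrow> (i mod (b*c)) div c = (i div c) mod b"
  by (simp add: mod_mult2_eq mult.commute[of b c])

lemma mod_mult_mod: "(i::nat) mod (b*c) mod c = i mod c"
  by (simp add: mod_mod_cancel)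

lemma kron_assoc: "kron (kron A B) C = kron A (kron B C)"
proof (rule eq_matI)
  fix i j assume i: "i < dim_row (kron A (kron B C))" and j: "j < dim_col (kron A (kron B C))"
  have i1: "i < dim_row A * dim_row B * dim_row C" and j1: "j < dim_col A * dim_col B * dim_col C"
    using i j by (auto simp: mult.assoc)
  have pos: "0 < dim_row B" "0 < dim_row C" "0 < dim_col B" "0 < dim_col C" using i1 j1
    by (auto intro!: Nat.gr0I)
  have a1: "i div dim_row C < dim_row A * dim_row B" "j div dim_col C < dim_col A * dim_col B"
    using div_mod_lt[OF i1] div_mod_lt[OF j1] by auto
  have a2: "i mod (dim_row B * dim_row C) < dim_row B * dim_row C" "j mod (dim_col B * dim_col C) < dim_col B * dim_col C"
    using pos by auto
  have dd: "\<And>x y z::nat. x div y div z = x div z div y" by (metis div_mult2_eq mult.commute)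
  show "kron (kron A B) C $$ (i, j) = kron A (kron B C) $$ (i, j)"
    using i1 j1 a1 a2 pos dd[of i "dim_row C" "dim_row B"] dd[of j "dim_col C" "dim_col B"]
    by (simp add: kron_index mult.assoc div_mult2_eq mod_mult_div mod_mult_mod mult.commute[of "dim_row C"] mult.commute[of "dim_col C"])
qed (auto simp: mult.assoc)

lemma kron_one: "kron (1\<^sub>m a) (1\<^sub>m b) = 1\<^sub>m (a*b)"
proof (rule eq_matI)
  fix i j assume i: "i < dim_row (1\<^sub>m (a*b) :: complex mat)" and j: "j < dim_col (1\<^sub>m (a*b) :: complex mat)"
  then have i1: "i < a*b" and j1: "j < a*b" by auto
  from div_mod_lt[OF i1] div_mod_lt[OF j1] have "b > 0" by auto
  have "(i = j) = (i div b = j div b \<and> i mod b = j mod b)"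
    by (metis div_mult_mod_eq)
  then show "kron (1\<^sub>m a) (1\<^sub>m b) $$ (i, j) = 1\<^sub>m (a*b) $$ (i, j)"
    using i1 j1 div_mod_lt[OF i1] div_mod_lt[OF j1] by (simp add: kron_index)
qed auto

lemma kron_one_right: "kron A (1\<^sub>m 1) = A"
  by (rule eq_matI) (auto simp: kron_index)

lemma kron_one_left: "kron (1\<^sub>m 1) A = A"
  by (rule eq_matI) (auto simp: kron_index)

lemma kron_one_right'[simp]: "kron A (1\<^sub>m (Suc 0)) = A"
  using kron_one_right by simp

lemma kron_one_left'[simp]: "kron (1\<^sub>m (Suc 0)) A = A"
  using kron_one_left by simp

lemma kron_add_left: "dim_row A = dim_row A' \<Longrightarrow> dim_col A = dim_col A' \<Longrightarrow> kron (A + A') B = kron A B + kron A' B"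
  apply (rule eq_matI)
  subgoal for i j using div_mod_lt[of i "dim_row A" "dim_row B"] div_mod_lt[of j "dim_col A" "dim_col B"]
    by (simp add: kron_index algebra_simps)
  by auto

lemma kron_add_right: "dim_row B = dim_row B' \<Longrightarrow> dim_col B = dim_col B' \<Longrightarrow> kron A (B + B') = kron A B + kron A B'"
  apply (rule eq_matI)
  subgoal for i j using div_mod_lt[of i "dim_row A" "dim_row B"] div_mod_lt[of j "dim_col A" "dim_col B"]
    by (simp add: kron_index algebra_simps)
  by auto

lemma kron_smult_left: "kron (c \<cdot>\<^sub>m A) B = c \<cdot>\<^sub>m kron A B"
  apply (rule eq_matI)
  subgoal for i j using div_mod_lt[of i "dim_row A" "dim_row B"] div_mod_lt[of j "dim_col A" "dim_col B"]
    by (simp add: kron_index algebra_simps)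
  by auto

lemma kron_smult_right: "kron A (c \<cdot>\<^sub>m B) = c \<cdot>\<^sub>m kron A B"
  apply (rule eq_matI)
  subgoal for i j using div_mod_lt[of i "dim_row A" "dim_row B"] div_mod_lt[of j "dim_col A" "dim_col B"]
    by (simp add: kron_index algebra_simps)
  by auto

lemma kron_zero_left: "kron (0\<^sub>m a b) B = 0\<^sub>m (a * dim_row B) (b * dim_col B)"
  apply (rule eq_matI)
  subgoal for i j using div_mod_lt[of i a "dim_row B"] div_mod_lt[of j b "dim_col B"]
    by (simp add: kron_index)
  by auto

lemma kron_zero_right: "kron A (0\<^sub>m a b) = 0\<^sub>m (dim_row A * a) (dim_col A * b)"
  apply (rule eq_matI)
  subgoal for i j using div_mod_lt[of i "dim_row A" a] div_mod_lt[of j "dim_col A" b]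
    by (simp add: kron_index)
  by auto

lemma massoc: assumes "dim_col (A::'a::semiring_0 mat) = dim_row B" "dim_col B = dim_row C"
  shows "A * B * C = A * (B * C)"
proof -
  have a: "A \<in> carrier_mat (dim_row A) (dim_col A)" by (rule carrier_matI) simp_all
  have b: "B \<in> carrier_mat (dim_col A) (dim_col B)" using assms by (intro carrier_matI) simp_all
  have c: "C \<in> carrier_mat (dim_col B) (dim_col C)" using assms by (intro carrier_matI) simp_all
  show ?thesis by (rule assoc_mult_mat[OF a b c])
qed

lemma adj_dims[simp]: "dim_row (adj A) = dim_col A" "dim_col (adj A) = dim_row A"
  by (auto simp: adj_def)

lemma adj_index[simp]: "i < dim_col A \<Longrightarrow> j < dim_row A \<Longrightarrow> adj A $$ (i,j) = cnj (A $$ (j,i))"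
  by (simp add: adj_def)

lemma adj_carrier[simp,intro]: "A \<in> carrier_mat a b \<Longrightarrow> adj A \<in> carrier_mat b a"
  unfolding carrier_mat_def by simp

lemma adj_adj[simp]: "adj (adj A) = A"
  by (rule eq_matI) auto

lemma adj_mult: "dim_col A = dim_row B \<Longrightarrow> adj (A * B) = adj B * adj A"
  apply (rule eq_matI)
  apply (auto simp: scalar_prod_def)
  apply (intro sum.cong)
   apply (auto simp: mult.commute)
  done

lemma adj_add: "dim_row A = dim_row B \<Longrightarrow> dim_col A = dim_col B \<Longrightarrow> adj (A + B) = adj A + adj B"
  by (rule eq_matI) auto

lemma adj_smult: "adj (c \<cdot>\<^sub>m A) = cnj c \<cdot>\<^sub>m adj A"
  by (rule eq_matI) auto

lemma adj_one[simp]: "adj (1\<^sub>m n) = 1\<^sub>m n"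
  by (rule eq_matI) auto

lemma adj_zero[simp]: "adj (0\<^sub>m a b) = 0\<^sub>m b a"
  by (rule eq_matI) auto

lemma adj_kron: "adj (kron A B) = kron (adj A) (adj B)"
  apply (rule eq_matI)
  subgoal for i j using div_mod_lt[of i "dim_col A" "dim_col B"] div_mod_lt[of j "dim_row A" "dim_row B"]
    by (simp add: kron_index)
  by auto

declare massoc[simp]


definition dmat :: "nat \<Rightarrow> (nat \<Rightarrow> complex) \<Rightarrow> complex mat" where
  "dmat n f = mat n n (\<lambda>(i,j). if i = j then f i else 0)"

lemma dmat_carrier[simp]: "dmat n f \<in> carrier_mat n n" by (simp add: dmat_def)
lemma dmat_dims[simp]: "dim_row (dmat n f) = n" "dim_col (dmat n f) = n" by (auto simp: dmat_def)
lemma dmat_index[simp]: "i < n \<Longrightarrow> j < n \<Longrightarrow> dmat n f $$ (i,j) = (if i = j then f i else 0)"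
  by (simp add: dmat_def)

lemma unitary_carrier: "unitary_mat n A \<Longrightarrow> A \<in> carrier_mat n n" by (simp add: unitary_mat_def)

lemma unitary_left: "A \<in> carrier_mat n n \<Longrightarrow> adj A * A = 1\<^sub>m n \<Longrightarrow> unitary_mat n A"
  unfolding unitary_mat_def
  using mat_mult_left_right_inverse[of "adj A" n A] by auto

lemma unitary_mult: assumes "unitary_mat n A" "unitary_mat n B" shows "unitary_mat n (A * B)"
proof (rule unitary_left)
  have A: "A \<in> carrier_mat n n" and B: "B \<in> carrier_mat n n" using assms unitary_carrier by auto
  show "A * B \<in> carrier_mat n n" using A B by simp
  have "adj (A * B) * (A * B) = adj B * adj A * (A * B)"
    using A B by (simp add: adj_mult)
  also have "\<dots> = adj B * (adj A * (A * B))"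
    using A B by (intro assoc_mult_mat[of _ n n _ n _ n]) auto
  also have "\<dots> = adj B * ((adj A * A) * B)"
    using A B by (simp add: assoc_mult_mat[of "adj A" n n A n B n])
  also have "\<dots> = 1\<^sub>m n" using assms A B unfolding unitary_mat_def by simp
  finally show "adj (A * B) * (A * B) = 1\<^sub>m n" .
qed

lemma unitary_adj: "unitary_mat n A \<Longrightarrow> unitary_mat n (adj A)"
  unfolding unitary_mat_def by auto

lemma unitary_one: "unitary_mat n (1\<^sub>m n)"
  unfolding unitary_mat_def by auto

lemma cscalar_self: "w \<bullet>c w = complex_of_real (\<Sum>k<dim_vec w. (cmod (w $ k))\<^sup>2)"
proof -
  have "w \<bullet>c w = (\<Sum>k<dim_vec w. w $ k * cnj (w $ k))"
    by (simp add: scalar_prod_def atLeast0LessThan)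
  also have "\<dots> = (\<Sum>k<dim_vec w. complex_of_real ((cmod (w $ k))\<^sup>2))"
    by (intro sum.cong refl) (use complex_norm_square in auto)
  finally show ?thesis by simp
qed

lemma exists_unitary_col0:
  assumes v: "v \<in> carrier_vec n" and v0: "v \<noteq> 0\<^sub>v n"
  shows "\<exists>W c. unitary_mat n W \<and> (\<forall>k<n. W $$ (k,0) = c * v $ k)"
proof -
  interpret cof_vec_space n "TYPE(complex)" .
  define b where "b = basis_completion v"
  from basis_completion[OF v v0, folded b_def]
  have dist_b: "distinct b" and indep: "\<not> lin_dep (set b)" and b: "set b \<subseteq> carrier_vec n" and hdb: "hd b = v"
    and len_b: "length b = n" by auto
  have n: "n \<noteq> 0" using v v0 by (auto intro!: eq_vecI)
  from hdb len_b n obtain vs where bv: "b = v # vs" by (cases b, auto)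
  define ws where "ws = gram_schmidt n b"
  from gram_schmidt_result[OF b dist_b indep refl, folded ws_def]
  have ws: "set ws \<subseteq> carrier_vec n" "corthogonal ws" "length ws = n" by (auto simp: len_b)
  from gram_schmidt_hd[OF v, of vs, folded bv] have hdws: "hd ws = v" unfolding ws_def .
  have ws0: "ws ! 0 = v" using hdws ws(3) n by (cases ws) auto
  define g where "g j = (\<Sum>k<n. (cmod (ws ! j $ k))\<^sup>2)" for j
  have wsc: "j < n \<Longrightarrow> ws ! j \<in> carrier_vec n" for j using ws by auto
  have gj: "j < n \<Longrightarrow> ws ! j \<bullet>c ws ! j = complex_of_real (g j)" for j
    using cscalar_self[of "ws ! j"] wsc[of j] by (simp add: g_def)
  have gpos: "j < n \<Longrightarrow> g j > 0" for j
  proof -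
    assume j: "j < n"
    have "ws ! j \<bullet>c ws ! j \<noteq> 0" using corthogonalD[OF ws(2)] j ws(3) by auto
    hence "g j \<noteq> 0" using gj[OF j] by auto
    moreover have "g j \<ge> 0" unfolding g_def by (intro sum_nonneg) auto
    ultimately show ?thesis by auto
  qed
  define a where "a j = complex_of_real (1 / sqrt (g j))" for j
  define W where "W = mat n n (\<lambda>(i,j). a j * (ws ! j $ i))"
  have Wc: "W \<in> carrier_mat n n" by (simp add: W_def)
  have "adj W * W = 1\<^sub>m n"
  proof (rule eq_matI)
    fix i j assume i: "i < dim_row (1\<^sub>m n :: complex mat)" and j: "j < dim_col (1\<^sub>m n :: complex mat)"
    hence i: "i < n" and j: "j < n" by auto
    have "(adj W * W) $$ (i,j) = (\<Sum>k<n. cnj (W $$ (k,i)) * W $$ (k,j))"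
      using i j Wc by (simp add: scalar_prod_def atLeast0LessThan)
    also have "\<dots> = cnj (a i) * a j * (\<Sum>k<n. (ws ! j $ k) * cnj (ws ! i $ k))"
      unfolding sum_distrib_left
      by (intro sum.cong refl) (simp add: W_def i j mult_ac)
    also have "(\<Sum>k<n. (ws ! j $ k) * cnj (ws ! i $ k)) = ws ! j \<bullet>c ws ! i"
      using wsc[OF i] by (simp add: scalar_prod_def atLeast0LessThan)
    also have "cnj (a i) * a j * (ws ! j \<bullet>c ws ! i) = 1\<^sub>m n $$ (i,j)"
    proof (cases "i = j")
      case True
      have "cnj (a i) * a i * complex_of_real (g i) = complex_of_real (1 / sqrt (g i) * (1 / sqrt (g i)) * g i)"
        by (simp only: a_def complex_cnj_complex_of_real of_real_mult)
      also have "\<dots> = 1"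
      proof -
        have "sqrt (g i) * sqrt (g i) = g i" using gpos[OF i] by simp
        then have "1 / sqrt (g i) * (1 / sqrt (g i)) * g i = 1" using gpos[OF i] by (simp add: field_simps)
        then show ?thesis by simp
      qed
      finally show ?thesis using True i gj[OF i] by simp
    next
      case False
      have "ws ! j \<bullet>c ws ! i = 0" using corthogonalD[OF ws(2)] i j ws(3) False by auto
      then show ?thesis using False i j by simp
    qed
    finally show "(adj W * W) $$ (i,j) = 1\<^sub>m n $$ (i,j)" .
  qed (use Wc in auto)
  hence "unitary_mat n W" using unitary_left[OF Wc] by simp
  moreover have "\<forall>k<n. W $$ (k,0) = a 0 * v $ k" using n ws0 by (simp add: W_def)
  ultimately show ?thesis by blast
qed

definition fb :: "nat \<Rightarrow> complex mat \<Rightarrow> complex mat" where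
  "fb m X = four_block_mat (1\<^sub>m 1) (0\<^sub>m 1 m) (0\<^sub>m m 1) X"

lemma fb_carrier[simp]: "X \<in> carrier_mat m m \<Longrightarrow> fb m X \<in> carrier_mat (Suc m) (Suc m)"
  unfolding fb_def using four_block_carrier_mat[of "1\<^sub>m 1" 1 1 X m m] by simp

lemma fb_mult: "X \<in> carrier_mat m m \<Longrightarrow> Y \<in> carrier_mat m m \<Longrightarrow> fb m X * fb m Y = fb m (X * Y)"
  unfolding fb_def
  by (subst mult_four_block_mat[of _ 1 1 _ m _ m _ _ 1 _ m]) auto

lemma fb_adj: "X \<in> carrier_mat m m \<Longrightarrow> adj (fb m X) = fb m (adj X)"
  unfolding fb_def by (rule eq_matI) auto

lemma fb_one: "fb m (1\<^sub>m m) = 1\<^sub>m (Suc m)"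
  unfolding fb_def by simp

lemma fb_unitary: "unitary_mat m X \<Longrightarrow> unitary_mat (Suc m) (fb m X)"
proof (rule unitary_left)
  assume u: "unitary_mat m X"
  then have X: "X \<in> carrier_mat m m" by (rule unitary_carrier)
  show "fb m X \<in> carrier_mat (Suc m) (Suc m)" using X by simp
  show "adj (fb m X) * fb m X = 1\<^sub>m (Suc m)"
    using u X by (simp add: fb_adj fb_mult fb_one unitary_mat_def)
qed

lemma herm_diag: "A \<in> carrier_mat n n \<Longrightarrow> adj A = A \<Longrightarrow> \<exists>Q f. unitary_mat n Q \<and> A = Q * dmat n f * adj Q"
proof (induction n arbitrary: A)
  case 0
  show ?case
    by (rule exI[of _ "1\<^sub>m 0"], rule exI[of _ "\<lambda>_. 0"]) (use 0 in \<open>auto simp: unitary_one intro!: eq_matI\<close>)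
next
  case (Suc m)
  let ?n = "Suc m"
  have A: "A \<in> carrier_mat ?n ?n" and hA: "adj A = A" by fact+
  from spectrum_non_empty[OF A] obtain e where "eigenvalue A e" unfolding spectrum_def by auto
  then obtain v where ev: "eigenvector A v e" unfolding eigenvalue_def by auto
  then have v: "v \<in> carrier_vec ?n" and v0: "v \<noteq> 0\<^sub>v ?n" and Av: "A *\<^sub>v v = e \<cdot>\<^sub>v v"
    using A unfolding eigenvector_def by auto
  from exists_unitary_col0[OF v v0] obtain W c where uW: "unitary_mat ?n W" and W0: "\<forall>k<?n. W $$ (k,0) = c * v $ k"
    by blast
  have W: "W \<in> carrier_mat ?n ?n" using uW by (rule unitary_carrier)
  have WW: "adj W * W = 1\<^sub>m ?n" "W * adj W = 1\<^sub>m ?n" using uW unfolding unitary_mat_def by auto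
  define A' where "A' = adj W * A * W"
  have A': "A' \<in> carrier_mat ?n ?n" using A W by (auto simp: A'_def intro!: mult_carrier_mat)
  have hA': "adj A' = A'" using A W hA by (simp add: A'_def adj_mult)
  have colW: "col W 0 = c \<cdot>\<^sub>v v" using W W0 v by (intro eq_vecI) auto
  have colAW: "col (A * W) 0 = e \<cdot>\<^sub>v col W 0"
  proof -
    have "col (A * W) 0 = A *\<^sub>v col W 0" using A W by (auto simp: mult_mat_vec_def)
    also have "\<dots> = c \<cdot>\<^sub>v (A *\<^sub>v v)" unfolding colW using A v by (simp add: mult_mat_vec)
    also have "\<dots> = e \<cdot>\<^sub>v col W 0" unfolding Av colW by (auto simp: mult.commute mult.left_commute)
    finally show ?thesis .
  qed
  have A'0: "i < ?n \<Longrightarrow> A' $$ (i,0) = (if i = 0 then e else 0)" for i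
  proof -
    assume i: "i < ?n"
    have "A' = adj W * (A * W)" using A W by (simp add: A'_def)
    then have "A' $$ (i,0) = row (adj W) i \<bullet> col (A * W) 0" using i A W by simp
    also have "\<dots> = e * (row (adj W) i \<bullet> col W 0)" unfolding colAW using W i
      by (simp add: scalar_prod_smult_distrib[of _ ?n])
    also have "row (adj W) i \<bullet> col W 0 = (adj W * W) $$ (i,0)" using i W by simp
    finally show ?thesis using WW i by simp
  qed
  have e: "cnj e = e"
  proof -
    have "adj A' $$ (0,0) = cnj (A' $$ (0,0))" using A' by simp
    then show ?thesis using hA' A'0[of 0] by simp
  qed
  have A'0': "j < ?n \<Longrightarrow> A' $$ (0,j) = (if j = 0 then e else 0)" for j
  proof -
    assume j: "j < ?n"
    have "A' $$ (0,j) = adj A' $$ (0,j)" using hA' by simp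
    also have "\<dots> = cnj (A' $$ (j,0))" using A' j by simp
    finally show ?thesis using A'0[OF j] e by simp
  qed
  define A3 where "A3 = mat m m (\<lambda>(i,j). A' $$ (Suc i, Suc j))"
  have A3: "A3 \<in> carrier_mat m m" by (simp add: A3_def)
  have hA3: "adj A3 = A3"
  proof (rule eq_matI)
    fix i j assume "i < dim_row A3" "j < dim_col A3"
    then have i: "i < m" and j: "j < m" using A3 by auto
    have "adj A3 $$ (i,j) = cnj (A' $$ (Suc j, Suc i))" using i j by (simp add: A3_def)
    also have "\<dots> = adj A' $$ (Suc i, Suc j)" using i j A' by simp
    also have "\<dots> = A3 $$ (i,j)" using hA' i j by (simp add: A3_def)
    finally show "adj A3 $$ (i,j) = A3 $$ (i,j)" .
  qed (use A3 in auto)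
  from Suc.IH[OF A3 hA3] obtain Q3 f3 where uQ3: "unitary_mat m Q3" and A3eq: "A3 = Q3 * dmat m f3 * adj Q3" by blast
  have Q3: "Q3 \<in> carrier_mat m m" using uQ3 by (rule unitary_carrier)
  define f where "f i = (if i = 0 then e else f3 (i - 1))" for i
  define E where "E = four_block_mat (mat 1 1 (\<lambda>_. e)) (0\<^sub>m 1 m) (0\<^sub>m m 1) A3"
  have A'E: "A' = E"
  proof (rule eq_matI)
    fix i j assume "i < dim_row E" "j < dim_col E"
    then have i: "i < ?n" and j: "j < ?n" using A3 by (auto simp: E_def)
    show "A' $$ (i,j) = E $$ (i,j)"
    proof (cases "i = 0 \<or> j = 0")
      case True
      then show ?thesis using A'0[OF i] A'0'[OF j] i j A3 by (auto simp: E_def)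
    next
      case False
      then obtain i' j' where "i = Suc i'" "j = Suc j'" by (cases i; cases j) auto
      then show ?thesis using i j A3 by (auto simp: E_def A3_def)
    qed
  qed (use A' A3 in \<open>auto simp: E_def\<close>)
  have dm: "four_block_mat (mat 1 1 (\<lambda>_. e)) (0\<^sub>m 1 m) (0\<^sub>m m 1) (dmat m f3) = dmat ?n f"
    by (rule eq_matI) (auto simp: f_def)
  have "E = fb m Q3 * (four_block_mat (mat 1 1 (\<lambda>_. e)) (0\<^sub>m 1 m) (0\<^sub>m m 1) (dmat m f3)) * fb m (adj Q3)"
    unfolding E_def fb_def A3eq using Q3
    apply (subst mult_four_block_mat[of _ 1 1 _ m _ m _ _ 1 _ m], auto)
    apply (subst mult_four_block_mat[of _ 1 1 _ m _ m _ _ 1 _ m], auto)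
    done
  then have AE: "A' = fb m Q3 * dmat ?n f * adj (fb m Q3)" using A'E dm Q3 by (simp add: fb_adj)
  define Q where "Q = W * fb m Q3"
  have uQ: "unitary_mat ?n Q" unfolding Q_def by (intro unitary_mult uW fb_unitary uQ3)
  have FQ: "fb m Q3 \<in> carrier_mat ?n ?n" using Q3 by simp
  have "A = W * A' * adj W"
  proof -
    have "W * A' * adj W = (W * adj W) * A * (W * adj W)"
      using A W by (simp add: A'_def assoc_mult_mat[of W ?n ?n "adj W" ?n A ?n])
    then show ?thesis using WW A by simp
  qed
  also have "\<dots> = Q * dmat ?n f * adj Q"
    unfolding AE Q_def using W FQ by (simp add: adj_mult)
  finally show ?case using uQ by blast
qed

lemma sum_delta_l[simp]: "k < (n::nat) \<Longrightarrow> (\<Sum>l<n. (if k = l then a l else 0) * b l) = a k * (b k :: 'a::comm_ring_1)"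
proof -
  assume k: "k < n"
  have "(\<Sum>l<n. (if k = l then a l else 0) * b l) = (\<Sum>l<n. if k = l then a l * b l else 0)"
    by (intro sum.cong) auto
  then show ?thesis using k by simp
qed

lemma sum_delta_l'[simp]: "k < (n::nat) \<Longrightarrow> (\<Sum>l<n. (if l = k then a l else 0) * b l) = a k * (b k :: 'a::comm_ring_1)"
proof -
  assume k: "k < n"
  have "(\<Sum>l<n. (if l = k then a l else 0) * b l) = (\<Sum>l<n. if l = k then a l * b l else 0)"
    by (intro sum.cong) auto
  then show ?thesis using k by simp
qed

lemma sum_delta_r[simp]: "k < (n::nat) \<Longrightarrow> (\<Sum>l<n. b l * (if l = k then a l else 0)) = (b k :: 'a::comm_ring_1) * a k"
proof -
  assume k: "k < n"
  have "(\<Sum>l<n. b l * (if l = k then a l else 0)) = (\<Sum>l<n. if l = k then b l * a l else 0)"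
    by (intro sum.cong) auto
  then show ?thesis using k by simp
qed

lemma sum_delta_r'[simp]: "k < (n::nat) \<Longrightarrow> (\<Sum>l<n. b l * (if k = l then a l else 0)) = (b k :: 'a::comm_ring_1) * a k"
proof -
  assume k: "k < n"
  have "(\<Sum>l<n. b l * (if k = l then a l else 0)) = (\<Sum>l<n. if k = l then b l * a l else 0)"
    by (intro sum.cong) auto
  then show ?thesis using k by simp
qed

lemma dmat_mult_left: assumes "X \<in> carrier_mat n m" "i < n" "j < m"
  shows "(dmat n f * X) $$ (i,j) = f i * X $$ (i,j)"
  using assms by (simp add: scalar_prod_def atLeast0LessThan)

lemma dmat_mult_right: assumes "X \<in> carrier_mat m n" "i < m" "j < n"
  shows "(X * dmat n f) $$ (i,j) = X $$ (i,j) * f j"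
  using assms by (simp add: scalar_prod_def atLeast0LessThan)

lemma dmat_mult: "dmat n f * dmat n g = dmat n (\<lambda>i. f i * g i)"
  by (rule eq_matI) (auto simp: scalar_prod_def atLeast0LessThan)

lemma adj_dmat: "adj (dmat n f) = dmat n (\<lambda>i. cnj (f i))"
  by (rule eq_matI) auto

lemma qdq_index: assumes Q: "Q \<in> carrier_mat n n" and i: "i < n" and j: "j < n"
  shows "(Q * dmat n f * adj Q) $$ (i,j) = (\<Sum>k<n. Q $$ (i,k) * f k * cnj (Q $$ (j,k)))"
  using Q i j by (simp add: scalar_prod_def mult.assoc atLeast0LessThan)

definition qform :: "nat \<Rightarrow> complex mat \<Rightarrow> (nat \<Rightarrow> complex) \<Rightarrow> complex" where
  "qform d A v = (\<Sum>i<d. \<Sum>j<d. cnj (v i) * A $$ (i,j) * v j)"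

lemma psd_qform: "psd d A \<longleftrightarrow> A \<in> carrier_mat d d \<and> adj A = A \<and> (\<forall>v. 0 \<le> Re (qform d A v))"
  unfolding psd_def qform_def by simp

lemma sum3_swap: "(\<Sum>i\<in>A. \<Sum>j\<in>B. \<Sum>k\<in>C. F i j k) = (\<Sum>k\<in>C. \<Sum>i\<in>A. \<Sum>j\<in>B. F i j k)"
proof -
  have "(\<Sum>i\<in>A. \<Sum>j\<in>B. \<Sum>k\<in>C. F i j k) = (\<Sum>i\<in>A. \<Sum>k\<in>C. \<Sum>j\<in>B. F i j k)"
    by (rule sum.cong[OF refl], rule sum.swap)
  also have "\<dots> = (\<Sum>k\<in>C. \<Sum>i\<in>A. \<Sum>j\<in>B. F i j k)" by (rule sum.swap)
  finally show ?thesis .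
qed

lemma qform_qdq: assumes Q: "Q \<in> carrier_mat n n"
  shows "qform n (Q * dmat n f * adj Q) v = (\<Sum>k<n. f k * (cnj (\<Sum>i<n. cnj (Q $$ (i,k)) * v i) * (\<Sum>j<n. cnj (Q $$ (j,k)) * v j)))"
proof -
  have "qform n (Q * dmat n f * adj Q) v = (\<Sum>i<n. \<Sum>j<n. cnj (v i) * (\<Sum>k<n. Q $$ (i,k) * f k * cnj (Q $$ (j,k))) * v j)"
    unfolding qform_def using Q by (intro sum.cong refl) (simp del: massoc index_mult_mat add: qdq_index)
  also have "\<dots> = (\<Sum>i<n. \<Sum>j<n. \<Sum>k<n. f k * ((cnj (v i) * Q $$ (i,k)) * (cnj (Q $$ (j,k)) * v j)))"
    by (intro sum.cong refl) (simp add: sum_distrib_left sum_distrib_right mult_ac)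
  also have "\<dots> = (\<Sum>k<n. \<Sum>i<n. \<Sum>j<n. f k * ((cnj (v i) * Q $$ (i,k)) * (cnj (Q $$ (j,k)) * v j)))"
    by (rule sum3_swap)
  also have "\<dots> = (\<Sum>k<n. f k * (cnj (\<Sum>i<n. cnj (Q $$ (i,k)) * v i) * (\<Sum>j<n. cnj (Q $$ (j,k)) * v j)))"
    by (intro sum.cong refl) (simp add: sum_distrib_left sum_distrib_right cnj_sum mult_ac)
  finally show ?thesis .
qed

lemma unitary_adj_mult: "unitary_mat n Q \<Longrightarrow> adj Q * Q = 1\<^sub>m n" by (simp add: unitary_mat_def)
lemma unitary_mult_adj: "unitary_mat n Q \<Longrightarrow> Q * adj Q = 1\<^sub>m n" by (simp add: unitary_mat_def)

lemma unitary_cancel1: assumes "unitary_mat n Q" "dim_row X = n" shows "adj Q * (Q * X) = X"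
proof -
  have Q: "Q \<in> carrier_mat n n" using assms by (simp add: unitary_mat_def)
  have "adj Q * (Q * X) = (adj Q * Q) * X" using Q assms by (simp del: massoc add: massoc[symmetric])
  then show ?thesis using assms by (simp add: unitary_mat_def)
qed

lemma unitary_cancel2: assumes "unitary_mat n Q" "dim_row X = n" shows "Q * (adj Q * X) = X"
proof -
  have Q: "Q \<in> carrier_mat n n" using assms by (simp add: unitary_mat_def)
  have "Q * (adj Q * X) = (Q * adj Q) * X" using Q assms by (simp del: massoc add: massoc[symmetric])
  then show ?thesis using assms by (simp add: unitary_mat_def)
qed

lemma diag_from: assumes uQ: "unitary_mat n Q" and A: "A = Q * dmat n f * adj Q"
  shows "dmat n f = adj Q * A * Q"
proof -
  have Q: "Q \<in> carrier_mat n n" using uQ by (rule unitary_carrier)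
  have "adj Q * A * Q = adj Q * (Q * (dmat n f * (adj Q * Q)))"
    using Q unfolding A by simp
  also have "\<dots> = dmat n f" using uQ Q by (simp add: unitary_cancel1 unitary_adj_mult)
  finally show ?thesis by simp
qed

lemma psd_diag: assumes p: "psd n A" and uQ: "unitary_mat n Q" and A: "A = Q * dmat n f * adj Q" and k: "k < n"
  shows "f k = complex_of_real (Re (f k)) \<and> Re (f k) \<ge> 0"
proof -
  have Q: "Q \<in> carrier_mat n n" using uQ by (rule unitary_carrier)
  have Ac: "A \<in> carrier_mat n n" and hA: "adj A = A" using p by (auto simp: psd_def)
  have D: "dmat n f = adj Q * A * Q" by (rule diag_from[OF uQ A])
  have "adj (dmat n f) = dmat n f" unfolding D using Q Ac hA by (simp add: adj_mult)
  then have "adj (dmat n f) $$ (k,k) = dmat n f $$ (k,k)" by simp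
  then have "cnj (f k) = f k" using k by simp
  then have "Im (f k) = 0" using \<open>cnj (f k) = f k\<close> by (simp add: complex_eq_iff)
  then have r: "f k = complex_of_real (Re (f k))" by (simp add: complex_eq_iff)
  have "f k = (adj Q * A * Q) $$ (k,k)" using arg_cong[OF D, of "\<lambda>M. M $$ (k,k)"] k by (simp del: massoc index_mult_mat)
  also have "\<dots> = (\<Sum>i<n. cnj (Q $$ (i,k)) * (\<Sum>j<n. A $$ (i,j) * Q $$ (j,k)))"
    using Q Ac k by (simp add: scalar_prod_def atLeast0LessThan)
  also have "\<dots> = qform n A (\<lambda>i. Q $$ (i,k))"
    unfolding qform_def by (intro sum.cong refl) (simp add: sum_distrib_left mult_ac)
  finally have "f k = qform n A (\<lambda>i. Q $$ (i,k))" .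
  then have "Re (f k) \<ge> 0" using p by (simp add: psd_qform)
  with r show ?thesis by simp
qed

lemma psd_diag_real: assumes p: "psd n A" and uQ: "unitary_mat n Q" and A: "A = Q * dmat n f * adj Q"
  shows "\<exists>r. (\<forall>k. r k \<ge> 0) \<and> A = Q * dmat n (\<lambda>k. complex_of_real (r k)) * adj Q"
proof -
  define r where "r k = (if k < n then Re (f k) else 0)" for k
  have "dmat n (\<lambda>k. complex_of_real (r k)) = dmat n f"
    by (rule eq_matI) (use psd_diag[OF p uQ A] in \<open>auto simp: r_def\<close>)
  moreover have "\<forall>k. r k \<ge> 0" using psd_diag[OF p uQ A] by (simp add: r_def)
  ultimately show ?thesis using A by metis
qed

lemma psd_decomp: assumes p: "psd n A"
  shows "\<exists>Q r. unitary_mat n Q \<and> (\<forall>k. r k \<ge> 0) \<and> A = Q * dmat n (\<lambda>k. complex_of_real (r k)) * adj Q"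
proof -
  have Ac: "A \<in> carrier_mat n n" and hA: "adj A = A" using p by (auto simp: psd_def)
  from herm_diag[OF Ac hA] obtain Q f where uQ: "unitary_mat n Q" and A: "A = Q * dmat n f * adj Q" by blast
  from psd_diag_real[OF p uQ A] uQ show ?thesis by blast
qed

lemma cnj_mult_self: "cnj z * z = complex_of_real ((cmod z)\<^sup>2)"
  by (metis complex_norm_square mult.commute)

lemma psd_of_decomp: assumes uQ: "unitary_mat n Q" and r: "\<forall>k. r k \<ge> 0"
  shows "psd n (Q * dmat n (\<lambda>k. complex_of_real (r k)) * adj Q)" (is "psd n ?B")
proof -
  have Q: "Q \<in> carrier_mat n n" using uQ by (rule unitary_carrier)
  have Bc: "?B \<in> carrier_mat n n" using Q by (auto intro!: mult_carrier_mat)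
  have hB: "adj ?B = ?B"
  proof -
    have "adj (dmat n (\<lambda>k. complex_of_real (r k))) = dmat n (\<lambda>k. complex_of_real (r k))" unfolding adj_dmat by simp
    then show ?thesis using Q by (simp add: adj_mult)
  qed
  have "0 \<le> Re (qform n ?B v)" for v
  proof -
    define w where "w k = (\<Sum>j<n. cnj (Q $$ (j,k)) * v j)" for k
    have "qform n ?B v = (\<Sum>k<n. complex_of_real (r k) * (cnj (w k) * w k))"
      unfolding w_def by (rule qform_qdq[OF Q])
    also have "\<dots> = (\<Sum>k<n. complex_of_real (r k * (cmod (w k))\<^sup>2))"
      by (intro sum.cong refl) (simp only: cnj_mult_self of_real_mult)
    finally show ?thesis using r by (simp add: sum_nonneg)
  qed
  then show ?thesis using Bc hB by (simp add: psd_qform)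
qed

lemma psd_sqrt_exists: assumes p: "psd n A" shows "\<exists>B. psd n B \<and> B * B = A"
proof -
  from psd_decomp[OF p] obtain Q r where uQ: "unitary_mat n Q" and r: "\<forall>k. r k \<ge> 0"
    and A: "A = Q * dmat n (\<lambda>k. complex_of_real (r k)) * adj Q" by blast
  have Q: "Q \<in> carrier_mat n n" using uQ by (rule unitary_carrier)
  define B where "B = Q * dmat n (\<lambda>k. complex_of_real (sqrt (r k))) * adj Q"
  have pB: "psd n B" unfolding B_def by (rule psd_of_decomp[OF uQ]) (use r in auto)
  have "B * B = Q * (dmat n (\<lambda>k. complex_of_real (sqrt (r k))) * dmat n (\<lambda>k. complex_of_real (sqrt (r k)))) * adj Q"
    unfolding B_def using Q uQ by (simp add: unitary_cancel1)
  also have "\<dots> = A" unfolding A dmat_mult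
  proof -
    have "(\<lambda>i. complex_of_real (sqrt (r i)) * complex_of_real (sqrt (r i))) = (\<lambda>k. complex_of_real (r k))"
    proof
      fix i
      have "sqrt (r i) * sqrt (r i) = r i" using r by simp
      then show "complex_of_real (sqrt (r i)) * complex_of_real (sqrt (r i)) = complex_of_real (r i)"
        by (metis of_real_mult)
    qed
    then show "Q * dmat n (\<lambda>i. complex_of_real (sqrt (r i)) * complex_of_real (sqrt (r i))) * adj Q = Q * dmat n (\<lambda>k. complex_of_real (r k)) * adj Q"
      by simp
  qed
  finally show ?thesis using pB by blast
qed

lemma sq_decomp: assumes uQ: "unitary_mat n Q"
  shows "(Q * dmat n f * adj Q) * (Q * dmat n f * adj Q) = Q * dmat n (\<lambda>k. f k * f k) * adj Q"
proof -
  have Q: "Q \<in> carrier_mat n n" using uQ by (rule unitary_carrier)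
  have "(Q * dmat n f * adj Q) * (Q * dmat n f * adj Q) = Q * (dmat n f * dmat n f) * adj Q"
    using Q uQ by (simp add: unitary_cancel1)
  then show ?thesis by (simp add: dmat_mult)
qed

lemma psd_sqrt_unique: assumes pB: "psd n B" and pC: "psd n C" and BC: "B * B = C * C" shows "B = C"
proof -
  from psd_decomp[OF pB] obtain Q r where uQ: "unitary_mat n Q" and r: "\<forall>k. r k \<ge> 0"
    and B: "B = Q * dmat n (\<lambda>k. complex_of_real (r k)) * adj Q" by blast
  from psd_decomp[OF pC] obtain R s where uR: "unitary_mat n R" and s: "\<forall>k. s k \<ge> 0"
    and C: "C = R * dmat n (\<lambda>k. complex_of_real (s k)) * adj R" by blast
  have Q: "Q \<in> carrier_mat n n" using uQ by (rule unitary_carrier)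
  have R: "R \<in> carrier_mat n n" using uR by (rule unitary_carrier)
  define T where "T = adj R * Q"
  have Tc: "T \<in> carrier_mat n n" using Q R by (auto simp: T_def intro!: mult_carrier_mat)
  let ?F = "dmat n (\<lambda>k. complex_of_real (r k) * complex_of_real (r k))"
  let ?G = "dmat n (\<lambda>k. complex_of_real (s k) * complex_of_real (s k))"
  have eq: "Q * ?F * adj Q = R * ?G * adj R"
    using BC unfolding B C sq_decomp[OF uQ] sq_decomp[OF uR] .
  have TF: "T * ?F = ?G * T"
  proof -
    have "T * ?F = adj R * (Q * ?F * adj Q) * Q"
      unfolding T_def using Q R uQ by (simp add: unitary_adj_mult)
    also have "\<dots> = adj R * (R * ?G * adj R) * Q" unfolding eq ..
    also have "\<dots> = ?G * T"
      unfolding T_def using Q R uR by (simp add: unitary_cancel1)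
    finally show ?thesis .
  qed
  have TD: "T * dmat n (\<lambda>k. complex_of_real (r k)) = dmat n (\<lambda>k. complex_of_real (s k)) * T"
  proof (rule eq_matI)
    fix i j assume "i < dim_row (dmat n (\<lambda>k. complex_of_real (s k)) * T)" "j < dim_col (dmat n (\<lambda>k. complex_of_real (s k)) * T)"
    then have i: "i < n" and j: "j < n" using Tc by auto
    have e: "T $$ (i,j) * (complex_of_real (r j) * complex_of_real (r j)) = (complex_of_real (s i) * complex_of_real (s i)) * T $$ (i,j)"
      using arg_cong[OF TF, of "\<lambda>M. M $$ (i,j)"] i j Tc
      by (simp del: index_mult_mat add: dmat_mult_left dmat_mult_right)
    have "T $$ (i,j) * complex_of_real (r j) = complex_of_real (s i) * T $$ (i,j)"
    proof (cases "T $$ (i,j) = 0")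
      case True then show ?thesis by simp
    next
      case False
      then have "complex_of_real (r j * r j) = complex_of_real (s i * s i)" using e by (simp add: mult.commute)
      then have "r j * r j = s i * s i" by (simp only: of_real_eq_iff)
      then have "sqrt (r j * r j) = sqrt (s i * s i)" by simp
      then have "r j = s i" using r[rule_format, of j] s[rule_format, of i] by simp
      then show ?thesis by (simp add: mult.commute)
    qed
    then show "(T * dmat n (\<lambda>k. complex_of_real (r k))) $$ (i,j) = (dmat n (\<lambda>k. complex_of_real (s k)) * T) $$ (i,j)"
      using i j Tc by (simp del: index_mult_mat add: dmat_mult_left dmat_mult_right)
  qed (use Tc in auto)
  have "C = R * (dmat n (\<lambda>k. complex_of_real (s k)) * T) * adj Q"
    unfolding C T_def using Q R uQ by (simp add: unitary_mult_adj)
  also have "\<dots> = R * (T * dmat n (\<lambda>k. complex_of_real (r k))) * adj Q" unfolding TD ..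
  also have "\<dots> = B" unfolding B T_def using Q R uR by (simp add: unitary_cancel2)
  finally show ?thesis by simp
qed

lemma msqrt_eq: assumes "dim_row A = n" "psd n B" "B * B = A" shows "msqrt A = B"
proof -
  have d: "dim_row A = n" using assms(1) by simp
  show ?thesis unfolding msqrt_def d
    by (rule the_equality) (use assms psd_sqrt_unique in auto)
qed

lemma fidelity_self: assumes "density n \<sigma>" shows "fidelity \<sigma> \<sigma> = 1"
proof -
  have p: "psd n \<sigma>" and t: "tr \<sigma> = 1" using assms by (auto simp: density_def)
  have sc: "\<sigma> \<in> carrier_mat n n" using p by (simp add: psd_def)
  from psd_sqrt_exists[OF p] obtain S where pS: "psd n S" and SS: "S * S = \<sigma>" by blast
  have Sc: "S \<in> carrier_mat n n" using pS by (simp add: psd_def)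
  have ms: "msqrt \<sigma> = S" by (rule msqrt_eq[OF _ pS SS]) (use sc in simp)
  have "S * \<sigma> * S = \<sigma> * \<sigma>" unfolding SS[symmetric] using Sc by simp
  moreover have "msqrt (\<sigma> * \<sigma>) = \<sigma>"
    by (rule msqrt_eq[OF _ p refl]) (use sc in simp)
  ultimately show ?thesis unfolding fidelity_def ms using t by simp
qed

lemma sum2: "(\<Sum>k\<in>{0..<2::nat}. f k) = f 0 + f 1"
  by (simp add: numeral_2_eq_2)

lemma less2: "(i::nat) < 2 \<longleftrightarrow> i = 0 \<or> i = 1" by auto

lemma mat2_eqI: assumes "A \<in> carrier_mat 2 2" "B \<in> carrier_mat 2 2"
  "A $$ (0,0) = B $$ (0,0)" "A $$ (0,1) = B $$ (0,1)" "A $$ (1,0) = B $$ (1,0)" "A $$ (1,1) = B $$ (1,1)"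
  shows "A = B"
  by (rule eq_matI) (use assms in \<open>auto simp: less2\<close>)

lemma mult2_index: assumes "A \<in> carrier_mat 2 2" "B \<in> carrier_mat 2 2" "i < 2" "j < 2"
  shows "(A * B) $$ (i,j) = A $$ (i,0) * B $$ (0,j) + A $$ (i,1) * B $$ (1,j)"
  using assms by (simp add: scalar_prod_def sum2)

lemma carrier2_mult[simp]: "A \<in> carrier_mat 2 2 \<Longrightarrow> B \<in> carrier_mat 2 2 \<Longrightarrow> A * B \<in> carrier_mat 2 2"
  by (rule mult_carrier_mat)

lemma carrier2_adj[simp]: "A \<in> carrier_mat 2 2 \<Longrightarrow> adj A \<in> carrier_mat 2 2"
  by (rule adj_carrier)

lemma proj0_carrier[simp]: "proj0 \<in> carrier_mat 2 2" by (simp add: proj0_def)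
lemma proj1_carrier[simp]: "proj1 \<in> carrier_mat 2 2" by (simp add: proj1_def)
lemma pauliX_carrier[simp]: "pauliX \<in> carrier_mat 2 2" by (simp add: pauliX_def)

definition Sg :: "complex mat" where "Sg = mat 2 2 (\<lambda>(i,j). if i = 0 \<and> j = 0 then 1 else if i = 1 \<and> j = 1 then \<i> else 0)"
lemma Sg_carrier[simp]: "Sg \<in> carrier_mat 2 2" by (simp add: Sg_def)

definition Ym :: "complex mat" where "Ym = Sg * pauliX * adj Sg"
lemma Ym_carrier[simp]: "Ym \<in> carrier_mat 2 2" unfolding Ym_def by simp

lemma mat2_mult[simp]: "mat 2 2 f * mat 2 2 g = mat 2 2 (\<lambda>(i,j). f (i,0) * g (0,j) + f (i,1) * g (1,j))"
  by (rule eq_matI) (auto simp: scalar_prod_def sum2)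

lemma mat2_adj[simp]: "adj (mat 2 2 f) = mat 2 2 (\<lambda>(i,j). cnj (f (j,i)))"
  by (rule eq_matI) auto

lemma mat2_add[simp]: "mat 2 2 f + mat 2 2 g = mat 2 2 (\<lambda>ij. f ij + g ij)"
  by (rule eq_matI) auto

lemma mat2_eq_iff: "mat 2 2 f = mat 2 2 g \<longleftrightarrow> f (0,0) = g (0,0) \<and> f (0,1) = g (0,1) \<and> f (1,0) = g (1,0) \<and> f (1,1) = g (1,1)"
proof
  assume "mat 2 2 f = mat 2 2 g"
  then have "\<And>i j. i < 2 \<Longrightarrow> j < 2 \<Longrightarrow> f (i,j) = g (i,j)" by (metis index_mat(1))
  then show "f (0,0) = g (0,0) \<and> f (0,1) = g (0,1) \<and> f (1,0) = g (1,0) \<and> f (1,1) = g (1,1)" by simp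
next
  assume "f (0,0) = g (0,0) \<and> f (0,1) = g (0,1) \<and> f (1,0) = g (1,0) \<and> f (1,1) = g (1,1)"
  then show "mat 2 2 f = mat 2 2 g" by (intro eq_matI) (auto simp: less2)
qed

lemma one2: "1\<^sub>m 2 = mat 2 2 (\<lambda>(i,j). if i = j then 1 else 0)"
  by (rule eq_matI) auto

lemma zero2: "0\<^sub>m 2 2 = mat 2 2 (\<lambda>_. 0)"
  by (rule eq_matI) auto

lemma smult2: "c \<cdot>\<^sub>m mat 2 2 f = mat 2 2 (\<lambda>ij. c * f ij)"
  by (rule eq_matI) auto

lemma mat2_of: "A \<in> carrier_mat 2 2 \<Longrightarrow> A = mat 2 2 (\<lambda>(i,j). A $$ (i,j))"
  by (rule eq_matI) auto

lemma proj_facts: "proj0 * proj0 = proj0" "proj1 * proj1 = proj1" "proj0 * proj1 = 0\<^sub>m 2 2" "proj1 * proj0 = 0\<^sub>m 2 2"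
  "proj1 + proj0 = 1\<^sub>m 2"
  by (simp_all add: proj0_def proj1_def one2 zero2 mat2_eq_iff)

lemma Sg_unitary: "unitary_mat 2 Sg"
  by (rule unitary_left[OF Sg_carrier]) (simp add: Sg_def one2 mat2_eq_iff)

lemma pauliX_unitary: "unitary_mat 2 pauliX"
  by (rule unitary_left[OF pauliX_carrier]) (simp add: pauliX_def one2 mat2_eq_iff)

lemma Ym_unitary: "unitary_mat 2 Ym"
  unfolding Ym_def by (intro unitary_mult Sg_unitary pauliX_unitary unitary_adj)

lemma pauli_twirl: assumes A: "A \<in> carrier_mat 2 2"
  shows "A + pauliX * A * adj pauliX + Ym * A * adj Ym + Ym * (pauliX * A * adj pauliX) * adj Ym
     = (2 * (A $$ (0,0) + A $$ (1,1))) \<cdot>\<^sub>m 1\<^sub>m 2"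
proof -
  obtain f where Af: "A = mat 2 2 f" using mat2_of[OF A] by blast
  show ?thesis unfolding Af Ym_def
    by (simp del: massoc add: Sg_def pauliX_def one2 smult2 mat2_eq_iff algebra_simps)
qed

primrec tp :: "nat \<Rightarrow> complex mat \<Rightarrow> complex mat" where
  "tp 0 A = 1\<^sub>m 1"
| "tp (Suc k) A = kron (tp k A) A"

lemma pow2_suc: "(2::nat)^k * 2 = 2^Suc k" by simp

lemma tp_carrier[simp]: "A \<in> carrier_mat 2 2 \<Longrightarrow> tp k A \<in> carrier_mat (2^k) (2^k)"
proof (induction k)
  case 0 then show ?case by simp
next
  case (Suc k)
  then have "kron (tp k A) A \<in> carrier_mat (2^k*2) (2^k*2)" by (intro kron_carrier)
  then show ?case by (simp only: pow2_suc tp.simps)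
qed

lemma tp_dims[simp]: "A \<in> carrier_mat 2 2 \<Longrightarrow> dim_row (tp k A) = 2^k" "A \<in> carrier_mat 2 2 \<Longrightarrow> dim_col (tp k A) = 2^k"
  using tp_carrier[of A k] by (auto simp only: carrier_mat_def mem_Collect_eq)

lemma tp_add: "tp (a + b) A = kron (tp a A) (tp b A)"
  by (induction b) (auto simp: kron_one_right kron_assoc)

lemma tp_one_exp: "tp 1 A = A" by (simp add: kron_one_left)

lemma tp_mult: "A \<in> carrier_mat 2 2 \<Longrightarrow> B \<in> carrier_mat 2 2 \<Longrightarrow> tp k A * tp k B = tp k (A * B)"
proof (induction k)
  case 0 then show ?case by simp
next
  case (Suc k)
  have "tp (Suc k) A * tp (Suc k) B = kron (tp k A * tp k B) (A * B)"
    using Suc.prems by (simp add: kron_mult)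
  then show ?case using Suc by simp
qed

lemma tp_adj: "adj (tp k A) = tp k (adj A)"
  by (induction k) (auto simp: adj_kron)

lemma tp_id: "tp k (1\<^sub>m 2) = 1\<^sub>m (2^k)"
  by (induction k) (simp_all only: tp.simps kron_one pow2_suc power_0)

lemma tp_unitary: assumes "unitary_mat 2 A" shows "unitary_mat (2^k) (tp k A)"
proof -
  have A: "A \<in> carrier_mat 2 2" using assms by (rule unitary_carrier)
  show ?thesis
    using assms A by (simp add: unitary_mat_def tp_adj tp_mult tp_id)
qed

lemma tp_split: assumes "q < n" shows "tp n A = kron (tp q A) (kron A (tp (n - q - 1) A))"
proof -
  have "n = q + (1 + (n - q - 1))" using assms by simp
  then have "tp n A = tp (q + (1 + (n - q - 1))) A" by simp
  also have "\<dots> = kron (tp q A) (kron A (tp (n - q - 1) A))" by (simp only: tp_add tp_one_exp)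
  finally show ?thesis .
qed

lemma one_carrier_pow: "1\<^sub>m (2^k) \<in> carrier_mat (2^k) (2^k)" by simp

lemma on_qubit_carrier[simp]: "A \<in> carrier_mat 2 2 \<Longrightarrow> q < n \<Longrightarrow> on_qubit n q A \<in> carrier_mat (2^n) (2^n)"
proof -
  assume A: "A \<in> carrier_mat 2 2" and q: "q < n"
  have "(2::nat)^q * (2 * 2^(n - q - 1)) = 2^(q + (1 + (n - q - 1)))" by (simp add: power_add)
  also have "q + (1 + (n - q - 1)) = n" using q by simp
  finally have e: "(2::nat)^q * (2 * 2^(n - q - 1)) = 2^n" .
  have "on_qubit n q A \<in> carrier_mat (2^q * (2 * 2^(n-q-1))) (2^q * (2 * 2^(n-q-1)))"
    unfolding on_qubit_def using A by (intro kron_carrier) auto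
  then show ?thesis by (simp only: e)
qed

lemma on_qubit_mult: "A \<in> carrier_mat 2 2 \<Longrightarrow> B \<in> carrier_mat 2 2 \<Longrightarrow> on_qubit n q A * on_qubit n q B = on_qubit n q (A * B)"
  unfolding on_qubit_def by (simp add: kron_mult)

lemma on_qubit_add: "A \<in> carrier_mat 2 2 \<Longrightarrow> B \<in> carrier_mat 2 2 \<Longrightarrow> on_qubit n q A + on_qubit n q B = on_qubit n q (A + B)"
  unfolding on_qubit_def by (simp add: kron_add_left kron_add_right)

lemma on_qubit_smult: "on_qubit n q (c \<cdot>\<^sub>m A) = c \<cdot>\<^sub>m on_qubit n q A"
  unfolding on_qubit_def by (simp add: kron_smult_left kron_smult_right)

lemma on_qubit_one: "q < n \<Longrightarrow> on_qubit n q (1\<^sub>m 2) = 1\<^sub>m (2^n)"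
proof -
  assume q: "q < n"
  have "(2::nat)^q * (2 * 2^(n - q - 1)) = 2^(q + (1 + (n - q - 1)))" by (simp add: power_add)
  also have "q + (1 + (n - q - 1)) = n" using q by simp
  finally have e: "(2::nat)^q * (2 * 2^(n - q - 1)) = 2^n" .
  show ?thesis unfolding on_qubit_def by (simp only: kron_one e)
qed

lemma on_qubit_adj: "adj (on_qubit n q A) = on_qubit n q (adj A)"
  unfolding on_qubit_def by (simp add: adj_kron)

lemma tp_conj: assumes q: "q < n" and A: "A \<in> carrier_mat 2 2" and M: "unitary_mat 2 M"
  shows "tp n M * on_qubit n q A * adj (tp n M) = on_qubit n q (M * A * adj M)"
proof -
  have Mc: "M \<in> carrier_mat 2 2" using M by (rule unitary_carrier)
  have u1: "tp k M * adj (tp k M) = 1\<^sub>m (2^k)" for k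
    using tp_unitary[OF M, of k] by (simp add: unitary_mat_def)
  have "tp n M * on_qubit n q A * adj (tp n M)
      = kron (tp q M * 1\<^sub>m (2^q) * adj (tp q M)) (kron (M * A * adj M) (tp (n-q-1) M * 1\<^sub>m (2^(n-q-1)) * adj (tp (n-q-1) M)))"
    unfolding tp_split[OF q, of M] on_qubit_def adj_kron using Mc A
    by (simp del: massoc add: kron_mult)
  also have "\<dots> = on_qubit n q (M * A * adj M)"
    unfolding on_qubit_def using Mc by (simp add: u1)
  finally show ?thesis .
qed

definition blk :: "nat \<Rightarrow> complex mat \<Rightarrow> complex mat \<Rightarrow> complex mat" where
  "blk k A B = kron A (on_qubit 2 (k - 1) proj1) + kron B (on_qubit 2 (k - 1) proj0)"

lemma oq2_carrier[simp]: "j < 2 \<Longrightarrow> P \<in> carrier_mat 2 2 \<Longrightarrow> on_qubit 2 j P \<in> carrier_mat 4 4"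
  using on_qubit_carrier[of P j 2] by simp

lemma oq2_dims[simp]: "j < 2 \<Longrightarrow> P \<in> carrier_mat 2 2 \<Longrightarrow> dim_row (on_qubit 2 j P) = 4"
  "j < 2 \<Longrightarrow> P \<in> carrier_mat 2 2 \<Longrightarrow> dim_col (on_qubit 2 j P) = 4"
  using oq2_carrier[of j P] by (auto simp only: carrier_mat_def mem_Collect_eq)

lemma on_qubit_zero: "on_qubit N q (0\<^sub>m 2 2) = 0\<^sub>m (2^q * (2 * 2^(N - q - 1))) (2^q * (2 * 2^(N - q - 1)))"
  unfolding on_qubit_def by (simp add: kron_zero_left kron_zero_right)

lemma oq2_zero: "j < 2 \<Longrightarrow> on_qubit 2 j (0\<^sub>m 2 2) = 0\<^sub>m 4 4"
  unfolding on_qubit_zero by (auto simp: less2)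

lemma oq2_one: "j < 2 \<Longrightarrow> on_qubit 2 j (1\<^sub>m 2) = 1\<^sub>m 4"
  using on_qubit_one[of j 2] by simp

lemma blk_carrier[simp]: "k \<in> {1,2} \<Longrightarrow> A \<in> carrier_mat d d \<Longrightarrow> B \<in> carrier_mat d d \<Longrightarrow> blk k A B \<in> carrier_mat (d*4) (d*4)"
  unfolding blk_def by (auto intro!: add_carrier_mat kron_carrier)

lemma blk_mult: assumes k: "k \<in> {1,2}" and A: "A \<in> carrier_mat d d" and B: "B \<in> carrier_mat d d"
  and C: "C \<in> carrier_mat d d" and D: "D \<in> carrier_mat d d"
  shows "blk k A B * blk k C D = blk k (A * C) (B * D)"
proof -
  obtain j where kj: "k - 1 = j" and j: "j < 2" using k by auto
  let ?p1 = "on_qubit 2 j proj1" let ?p0 = "on_qubit 2 j proj0"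
  have p1: "?p1 \<in> carrier_mat 4 4" and p0: "?p0 \<in> carrier_mat 4 4" using j by auto
  have pp: "?p1 * ?p1 = ?p1" "?p0 * ?p0 = ?p0" "?p1 * ?p0 = 0\<^sub>m 4 4" "?p0 * ?p1 = 0\<^sub>m 4 4"
    using j by (simp_all add: on_qubit_mult proj_facts oq2_zero)
  have X1: "kron A ?p1 \<in> carrier_mat (d*4) (d*4)" and X2: "kron B ?p0 \<in> carrier_mat (d*4) (d*4)"
    and Y1: "kron C ?p1 \<in> carrier_mat (d*4) (d*4)" and Y2: "kron D ?p0 \<in> carrier_mat (d*4) (d*4)"
    using A B C D p1 p0 by (auto intro!: kron_carrier)
  have "blk k A B * blk k C D = (kron A ?p1 + kron B ?p0) * kron C ?p1 + (kron A ?p1 + kron B ?p0) * kron D ?p0"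
    unfolding blk_def kj by (rule mult_add_distrib_mat[OF add_carrier_mat[OF X2] Y1 Y2])
  also have "\<dots> = (kron A ?p1 * kron C ?p1 + kron B ?p0 * kron C ?p1) + (kron A ?p1 * kron D ?p0 + kron B ?p0 * kron D ?p0)"
    by (simp only: add_mult_distrib_mat[OF X1 X2 Y1] add_mult_distrib_mat[OF X1 X2 Y2])
  also have "\<dots> = (kron (A * C) (?p1 * ?p1) + kron (B * C) (?p0 * ?p1)) + (kron (A * D) (?p1 * ?p0) + kron (B * D) (?p0 * ?p0))"
    using A B C D p1 p0 j by (simp add: kron_mult)
  also have "\<dots> = (kron (A * C) ?p1 + 0\<^sub>m (d*4) (d*4)) + (0\<^sub>m (d*4) (d*4) + kron (B * D) ?p0)"
    unfolding pp using A B C D by (simp add: kron_zero_right)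
  also have "\<dots> = blk k (A * C) (B * D)"
    unfolding blk_def kj using A B C D p1 p0 by (simp add: kron_carrier)
  finally show ?thesis .
qed

lemma kron_id4_blk: assumes k: "k \<in> {1,2}" and M: "M \<in> carrier_mat d d"
  shows "kron M (1\<^sub>m 4) = blk k M M"
proof -
  obtain j where kj: "k - 1 = j" and j: "j < 2" using k by auto
  have "1\<^sub>m 4 = on_qubit 2 j proj1 + on_qubit 2 j proj0"
    using j by (simp add: on_qubit_add proj_facts oq2_one)
  then show ?thesis unfolding blk_def kj using j by (simp add: kron_add_right)
qed

lemma ctrl_blk: "ctrl n 2 k Ct = blk k Ct (1\<^sub>m (2^n))"
  by (simp add: ctrl_def blk_def)

lemma oq_anc: assumes j: "j < 2" shows "on_qubit (n+2) (n+j) P = kron (1\<^sub>m (2^n)) (on_qubit 2 j P)"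
proof -
  have e1: "n + 2 - (n + j) - 1 = 2 - j - 1" by simp
  have "kron (1\<^sub>m (2^n)) (on_qubit 2 j P) = kron (kron (1\<^sub>m (2^n)) (1\<^sub>m (2^j))) (kron P (1\<^sub>m (2^(2 - j - 1))))"
    unfolding on_qubit_def by (simp add: kron_assoc)
  also have "\<dots> = kron (1\<^sub>m (2^(n+j))) (kron P (1\<^sub>m (2^(2 - j - 1))))" by (simp add: kron_one power_add)
  finally show ?thesis unfolding on_qubit_def e1 by simp
qed

lemma oq_comp: assumes q: "q < n" shows "on_qubit (n+2) q A = kron (on_qubit n q A) (1\<^sub>m 4)"
proof -
  have e1: "(2::nat)^(n + 2 - q - 1) = 2^(n - q - 1) * 4"
  proof -
    have "n + 2 - q - 1 = (n - q - 1) + 2" using q by simp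
    then show ?thesis by (simp add: power_add)
  qed
  have "kron (on_qubit n q A) (1\<^sub>m 4) = kron (1\<^sub>m (2^q)) (kron A (kron (1\<^sub>m (2^(n - q - 1))) (1\<^sub>m 4)))"
    unfolding on_qubit_def by (simp add: kron_assoc)
  also have "\<dots> = on_qubit (n+2) q A" unfolding on_qubit_def e1 by (simp add: kron_one)
  finally show ?thesis by simp
qed

lemma gate_cnot_blk: assumes k: "k \<in> {1,2}" and q: "q < n"
  shows "gate_mat (n+2) (CNOT (n + (k - 1)) q) = blk k (on_qubit n q pauliX) (1\<^sub>m (2^n))"
proof -
  have j: "k - 1 < 2" using k by auto
  have Xq: "on_qubit n q pauliX \<in> carrier_mat (2^n) (2^n)" using q by simp
  have "gate_mat (n+2) (CNOT (n + (k - 1)) q) = kron (1\<^sub>m (2^n)) (on_qubit 2 (k-1) proj0) + kron (1\<^sub>m (2^n)) (on_qubit 2 (k-1) proj1) * kron (on_qubit n q pauliX) (1\<^sub>m 4)"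
    unfolding gate_mat.simps oq_anc[OF j] oq_comp[OF q] ..
  also have "kron (1\<^sub>m (2^n)) (on_qubit 2 (k-1) proj1) * kron (on_qubit n q pauliX) (1\<^sub>m 4) = kron (on_qubit n q pauliX) (on_qubit 2 (k-1) proj1)"
    using Xq j by (simp add: kron_mult)
  also have "kron (1\<^sub>m (2^n)) (on_qubit 2 (k-1) proj0) + kron (on_qubit n q pauliX) (on_qubit 2 (k-1) proj1) = blk k (on_qubit n q pauliX) (1\<^sub>m (2^n))"
    unfolding blk_def using Xq j by (intro comm_add_mat) (auto intro!: kron_carrier)
  finally show ?thesis .
qed

lemma gate_g1_blk: assumes k: "k \<in> {1,2}" and q: "q < n" and A: "A \<in> carrier_mat 2 2"
  shows "gate_mat (n+2) (G1 q A) = blk k (on_qubit n q A) (on_qubit n q A)"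
  using oq_comp[OF q] kron_id4_blk[OF k on_qubit_carrier[OF A q]] by simp

lemma gate_carrier: assumes "gate_ok N g" shows "gate_mat N g \<in> carrier_mat (2^N) (2^N)"
proof (cases g)
  case (CNOT c t)
  then have c: "c < N" and t: "t < N" using assms by auto
  have h1: "on_qubit N c proj1 \<in> carrier_mat (2^N) (2^N)" using c by simp
  have h2: "on_qubit N t pauliX \<in> carrier_mat (2^N) (2^N)" using t by simp
  show ?thesis unfolding CNOT gate_mat.simps using mult_carrier_mat[OF h1 h2] by simp
next
  case (G1 q A)
  then have q: "q < N" and A: "A \<in> carrier_mat 2 2" using assms by (auto simp: unitary_mat_def)
  show ?thesis unfolding G1 gate_mat.simps using q A by simp
qed

lemma circuit_single: assumes "gate_ok N g" shows "circuit_mat N [g] = gate_mat N g"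
  unfolding circuit_mat.simps by (rule left_mult_one_mat[OF gate_carrier[OF assms]])

lemma circuit_carrier: "\<forall>g\<in>set gs. gate_ok N g \<Longrightarrow> circuit_mat N gs \<in> carrier_mat (2^N) (2^N)"
  by (induction gs) (auto intro!: mult_carrier_mat gate_carrier)

lemma circuit_append: "\<forall>g\<in>set (xs @ ys). gate_ok N g \<Longrightarrow> circuit_mat N (xs @ ys) = circuit_mat N ys * circuit_mat N xs"
proof (induction xs)
  case Nil
  have "circuit_mat N ys \<in> carrier_mat (2^N) (2^N)" using Nil by (intro circuit_carrier) auto
  then show ?case by simp
next
  case (Cons x xs)
  have c1: "circuit_mat N ys \<in> carrier_mat (2^N) (2^N)" using Cons.prems by (intro circuit_carrier) auto
  have c2: "circuit_mat N xs \<in> carrier_mat (2^N) (2^N)" using Cons.prems by (intro circuit_carrier) auto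
  have c3: "gate_mat N x \<in> carrier_mat (2^N) (2^N)" using Cons.prems by (intro gate_carrier) auto
  have "circuit_mat N ((x # xs) @ ys) = circuit_mat N ys * circuit_mat N xs * gate_mat N x"
    using Cons by simp
  also have "\<dots> = circuit_mat N ys * circuit_mat N (x # xs)"
    using c1 c2 c3 by simp
  finally show ?case .
qed

lemma oq_tp_step: assumes m: "m < n" and A: "A \<in> carrier_mat 2 2"
  shows "on_qubit n m A * kron (tp m A) (1\<^sub>m (2^(n-m))) = kron (tp (Suc m) A) (1\<^sub>m (2^(n - Suc m)))"
proof -
  have e: "(2::nat)^(n-m) = 2 * 2^(n - m - 1)"
  proof -
    have "n - m = Suc (n - m - 1)" using m by simp
    then show ?thesis by (metis power_Suc)
  qed
  have "on_qubit n m A * kron (tp m A) (1\<^sub>m (2^(n-m))) = kron (1\<^sub>m (2^m)) (kron A (1\<^sub>m (2^(n - m - 1)))) * kron (tp m A) (kron (1\<^sub>m 2) (1\<^sub>m (2^(n - m - 1))))"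
    unfolding on_qubit_def e by (simp add: kron_one)
  also have "\<dots> = kron (tp m A) (kron A (1\<^sub>m (2^(n - m - 1))))"
    using A by (simp add: kron_mult)
  also have "\<dots> = kron (tp (Suc m) A) (1\<^sub>m (2^(n - Suc m)))"
    by (simp add: kron_assoc)
  finally show ?thesis .
qed

lemma circ_tp: assumes k: "k \<in> {1,2}" and A: "A \<in> carrier_mat 2 2"
  and gl: "\<And>q. q < n \<Longrightarrow> (\<forall>g\<in>set (gl q). gate_ok (n+2) g) \<and> circuit_mat (n+2) (gl q) = blk k (on_qubit n q A) (1\<^sub>m (2^n))"
  shows "m \<le> n \<Longrightarrow> circuit_mat (n+2) (concat (map gl [0..<m])) = blk k (kron (tp m A) (1\<^sub>m (2^(n-m)))) (1\<^sub>m (2^n))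
     \<and> (\<forall>g\<in>set (concat (map gl [0..<m])). gate_ok (n+2) g)"
proof (induction m)
  case 0
  have "blk k (kron (tp 0 A) (1\<^sub>m (2^(n-0)))) (1\<^sub>m (2^n)) = kron (1\<^sub>m (2^n)) (1\<^sub>m 4)"
    using kron_id4_blk[OF k, of "1\<^sub>m (2^n)" "2^n"] by simp
  also have "\<dots> = 1\<^sub>m (2^n * 4)" by (simp add: kron_one)
  finally have "blk k (kron (tp 0 A) (1\<^sub>m (2^(n-0)))) (1\<^sub>m (2^n)) = 1\<^sub>m (2^n * 4)" .
  moreover have "(2::nat)^n * 4 = 2^(n+2)" by (simp add: power_add)
  ultimately show ?case by simp
next
  case (Suc m)
  then have m: "m < n" by simp
  from Suc.IH m have IH: "circuit_mat (n+2) (concat (map gl [0..<m])) = blk k (kron (tp m A) (1\<^sub>m (2^(n-m)))) (1\<^sub>m (2^n))"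
    and ok: "\<forall>g\<in>set (concat (map gl [0..<m])). gate_ok (n+2) g" by auto
  from gl[OF m] have okm: "\<forall>g\<in>set (gl m). gate_ok (n+2) g" and cm: "circuit_mat (n+2) (gl m) = blk k (on_qubit n m A) (1\<^sub>m (2^n))" by auto
  have ok': "\<forall>g\<in>set (concat (map gl [0..<m]) @ gl m). gate_ok (n+2) g" using ok okm by auto
  have T: "kron (tp m A) (1\<^sub>m (2^(n-m))) \<in> carrier_mat (2^n) (2^n)"
  proof -
    have "kron (tp m A) (1\<^sub>m (2^(n-m))) \<in> carrier_mat (2^m * 2^(n-m)) (2^m * 2^(n-m))" using A by (intro kron_carrier) auto
    moreover have "(2::nat)^m * 2^(n-m) = 2^n" using m by (simp add: power_add[symmetric])
    ultimately show ?thesis by simp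
  qed
  have "circuit_mat (n+2) (concat (map gl [0..<Suc m])) = circuit_mat (n+2) (gl m) * circuit_mat (n+2) (concat (map gl [0..<m]))"
    using circuit_append[OF ok'] by simp
  also have "\<dots> = blk k (on_qubit n m A * kron (tp m A) (1\<^sub>m (2^(n-m)))) (1\<^sub>m (2^n) * 1\<^sub>m (2^n))"
    unfolding cm IH using k A m T by (intro blk_mult) auto
  also have "\<dots> = blk k (kron (tp (Suc m) A) (1\<^sub>m (2^(n - Suc m)))) (1\<^sub>m (2^n))"
    using oq_tp_step[OF m A] by simp
  finally show ?case using ok' by simp
qed

lemma cnot_count_append: "cnot_count (xs @ ys) = cnot_count xs + cnot_count ys"
  by (simp add: cnot_count_def)

lemma cnot_count_concat: "(\<And>q. cnot_count (gl q) = 1) \<Longrightarrow> cnot_count (concat (map gl [0..<m])) = m"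
  by (induction m) (auto simp: cnot_count_append, simp add: cnot_count_def)

definition gl1 :: "nat \<Rightarrow> nat \<Rightarrow> gate list" where "gl1 n q = [CNOT n q]"
definition gl2 :: "nat \<Rightarrow> nat \<Rightarrow> gate list" where "gl2 n q = [G1 q (adj Sg), CNOT (n+1) q, G1 q Sg]"

lemma gl1_ok: assumes q: "q < n" shows "(\<forall>g\<in>set (gl1 n q). gate_ok (n+2) g) \<and> circuit_mat (n+2) (gl1 n q) = blk 1 (on_qubit n q pauliX) (1\<^sub>m (2^n))"
proof -
  have "circuit_mat (n+2) (gl1 n q) = gate_mat (n+2) (CNOT n q)" unfolding gl1_def using q by (intro circuit_single) auto
  also have "\<dots> = blk 1 (on_qubit n q pauliX) (1\<^sub>m (2^n))" using gate_cnot_blk[of 1 q n] q by simp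
  finally show ?thesis using q by (simp add: gl1_def)
qed

lemma gl2_ok: assumes q: "q < n" shows "(\<forall>g\<in>set (gl2 n q). gate_ok (n+2) g) \<and> circuit_mat (n+2) (gl2 n q) = blk 2 (on_qubit n q Ym) (1\<^sub>m (2^n))"
proof -
  have ok: "\<forall>g\<in>set (gl2 n q). gate_ok (n+2) g" using q Sg_unitary unitary_adj[OF Sg_unitary] by (simp add: gl2_def)
  let ?S = "on_qubit n q Sg" let ?Sd = "on_qubit n q (adj Sg)" let ?X = "on_qubit n q pauliX"
  have S: "?S \<in> carrier_mat (2^n) (2^n)" and Sd: "?Sd \<in> carrier_mat (2^n) (2^n)" and X: "?X \<in> carrier_mat (2^n) (2^n)"
    using q by auto
  have g1: "gate_mat (n+2) (G1 q (adj Sg)) = blk 2 ?Sd ?Sd" using gate_g1_blk[of 2 q n "adj Sg"] q by simp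
  have g2: "gate_mat (n+2) (CNOT (n+1) q) = blk 2 ?X (1\<^sub>m (2^n))" using gate_cnot_blk[of 2 q n] q by simp
  have g3: "gate_mat (n+2) (G1 q Sg) = blk 2 ?S ?S" using gate_g1_blk[of 2 q n Sg] q by simp
  have c3: "blk 2 ?S ?S \<in> carrier_mat (2^n*4) (2^n*4)" using S by simp
  have "circuit_mat (n+2) (gl2 n q) = circuit_mat (n+2) [G1 q Sg] * gate_mat (n+2) (CNOT (n+1) q) * gate_mat (n+2) (G1 q (adj Sg))"
    unfolding gl2_def by (simp only: circuit_mat.simps(2))
  also have "\<dots> = blk 2 ?S ?S * blk 2 ?X (1\<^sub>m (2^n)) * blk 2 ?Sd ?Sd"
  proof -
    have c1: "circuit_mat (n+2) [G1 q Sg] = gate_mat (n+2) (G1 q Sg)" by (rule circuit_single) (use q Sg_unitary in simp)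
    show ?thesis by (simp only: c1 g1 g2 g3)
  qed
  also have "blk 2 ?S ?S * blk 2 ?X (1\<^sub>m (2^n)) = blk 2 (?S * ?X) (?S * 1\<^sub>m (2^n))"
    by (rule blk_mult) (use S X in auto)
  also have "blk 2 (?S * ?X) (?S * 1\<^sub>m (2^n)) * blk 2 ?Sd ?Sd = blk 2 (?S * ?X * ?Sd) (?S * 1\<^sub>m (2^n) * ?Sd)"
    by (rule blk_mult) (use S X Sd in \<open>auto intro!: mult_carrier_mat\<close>)
  also have "?S * ?X * ?Sd = on_qubit n q Ym"
    unfolding Ym_def by (simp del: massoc add: on_qubit_mult)
  also have "?S * 1\<^sub>m (2^n) * ?Sd = 1\<^sub>m (2^n)"
  proof -
    have "?S * 1\<^sub>m (2^n) = ?S" using S by simp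
    moreover have "?S * ?Sd = 1\<^sub>m (2^n)" using q unitary_mult_adj[OF Sg_unitary] by (simp add: on_qubit_mult on_qubit_one)
    ultimately show ?thesis by simp
  qed
  finally show ?thesis using ok by simp
qed

declare kron_one_right[simp] kron_one_left[simp]

lemma cdim: "A \<in> carrier_mat a b \<Longrightarrow> dim_row A = a" "A \<in> carrier_mat a b \<Longrightarrow> dim_col A = b" by auto

lemma sum4: "(\<Sum>k\<in>{0..<4::nat}. f k) = f 0 + f 1 + f 2 + f 3"
  by (simp add: eval_nat_numeral)

lemma less4: "(i::nat) < 4 \<longleftrightarrow> i = 0 \<or> i = 1 \<or> i = 2 \<or> i = 3" by auto

definition ket :: "nat \<Rightarrow> complex mat" where "ket s = mat 4 1 (\<lambda>(i,j). if i = s then 1 else 0)"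
definition bra0 :: "complex mat" where "bra0 = mat 1 4 (\<lambda>(i,j). if j = 0 then 1 else 0)"
definition rr :: "complex mat" where "rr = mat 1 4 (\<lambda>_. 1/2)"
definition cc :: "complex mat" where "cc = mat 4 1 (\<lambda>_. 1/2)"
definition pbit :: "nat \<Rightarrow> nat \<Rightarrow> bool" where "pbit k s = (if k = 1 then 2 \<le> s else odd s)"

lemma ket_carrier[simp]: "ket s \<in> carrier_mat 4 1" by (simp add: ket_def)
lemma bra0_carrier[simp]: "bra0 \<in> carrier_mat 1 4" by (simp add: bra0_def)
lemma rr_carrier[simp]: "rr \<in> carrier_mat 1 4" by (simp add: rr_def)
lemma cc_carrier[simp]: "cc \<in> carrier_mat 4 1" by (simp add: cc_def)
lemma rr_dims[simp]: "dim_row rr = 1" "dim_col rr = 4" by (auto simp: rr_def)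
lemma cc_dims[simp]: "dim_row cc = 4" "dim_col cc = 1" by (auto simp: cc_def)
lemma bra0_dims[simp]: "dim_row bra0 = 1" "dim_col bra0 = 4" by (auto simp: bra0_def)
lemma ket_dims[simp]: "dim_row (ket s) = 4" "dim_col (ket s) = 1" by (auto simp: ket_def)
lemma a0_carrier[simp]: "anc_zero 2 \<in> carrier_mat 4 4" by (simp add: anc_zero_def)
lemma a0_dims[simp]: "dim_row (anc_zero 2) = 4" "dim_col (anc_zero 2) = 4" by (auto simp: anc_zero_def)

lemma sq2: "1 / complex_of_real (sqrt 2) * (1 / complex_of_real (sqrt 2)) = 1/2"
proof -
  have "complex_of_real (sqrt 2) * complex_of_real (sqrt 2) = 2"
    by (metis of_real_mult of_real_numeral real_sqrt_mult_self abs_numeral)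
  then show ?thesis by (simp add: field_simps)
qed

lemma sq2b: "2 / complex_of_real (sqrt 2) = complex_of_real (sqrt 2)"
proof -
  have e: "complex_of_real (sqrt 2) * complex_of_real (sqrt 2) = 2"
    by (metis of_real_mult of_real_numeral real_sqrt_mult_self abs_numeral)
  have "complex_of_real (sqrt 2) \<noteq> 0" by simp
  then show ?thesis using e by (simp add: field_simps)
qed

lemma hpow2: "hpow 2 = kron hadamard hadamard"
  by (simp add: numeral_2_eq_2)

lemma had_carrier[simp]: "hadamard \<in> carrier_mat 2 2" by (simp add: hadamard_def)
lemma had_dims[simp]: "dim_row hadamard = 2" "dim_col hadamard = 2" by (auto simp: hadamard_def)

lemma HH_index: "i < 4 \<Longrightarrow> j < 4 \<Longrightarrow> hpow 2 $$ (i,j) = hadamard $$ (i div 2, j div 2) * hadamard $$ (i mod 2, j mod 2)"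
  unfolding hpow2 by (simp add: kron_index)

lemma HH_carrier[simp]: "hpow 2 \<in> carrier_mat 4 4" unfolding hpow2 using kron_carrier[OF had_carrier had_carrier] by simp
lemma HH_dims[simp]: "dim_row (hpow 2) = 4" "dim_col (hpow 2) = 4" using HH_carrier by (auto simp only: carrier_mat_def mem_Collect_eq)

lemma F1: "anc_zero 2 * hpow 2 = ket 0 * rr"
proof (rule eq_matI)
  fix i j assume "i < dim_row (ket 0 * rr)" "j < dim_col (ket 0 * rr)"
  then have i: "i < 4" and j: "j < 4" by auto
  have "(anc_zero 2 * hpow 2) $$ (i,j) = (\<Sum>k\<in>{0..<4}. anc_zero 2 $$ (i,k) * hpow 2 $$ (k,j))"
    using i j by (simp add: scalar_prod_def)
  also have "\<dots> = (if i = 0 then hpow 2 $$ (0,j) else 0)"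
    unfolding sum4 using i by (simp add: anc_zero_def)
  also have "\<dots> = (ket 0 * rr) $$ (i,j)"
    using i j by (auto simp: HH_index ket_def rr_def scalar_prod_def hadamard_def sq2 sq2b less4)
  finally show "(anc_zero 2 * hpow 2) $$ (i,j) = (ket 0 * rr) $$ (i,j)" .
qed auto

lemma F2: "hpow 2 * anc_zero 2 = cc * bra0"
proof (rule eq_matI)
  fix i j assume "i < dim_row (cc * bra0)" "j < dim_col (cc * bra0)"
  then have i: "i < 4" and j: "j < 4" by auto
  have "(hpow 2 * anc_zero 2) $$ (i,j) = (\<Sum>k\<in>{0..<4}. hpow 2 $$ (i,k) * anc_zero 2 $$ (k,j))"
    using i j by (simp add: scalar_prod_def)
  also have "\<dots> = (if j = 0 then hpow 2 $$ (i,0) else 0)"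
    unfolding sum4 using j by (simp add: anc_zero_def)
  also have "\<dots> = (cc * bra0) $$ (i,j)"
    using i j by (auto simp: HH_index cc_def bra0_def scalar_prod_def hadamard_def sq2 sq2b less4)
  finally show "(hpow 2 * anc_zero 2) $$ (i,j) = (cc * bra0) $$ (i,j)" .
qed auto

lemma F3: "ket 0 * bra0 = anc_zero 2"
  by (rule eq_matI) (auto simp: ket_def bra0_def anc_zero_def scalar_prod_def)

lemma F4: "cc = (1/2) \<cdot>\<^sub>m (ket 0 + ket 1 + ket 2 + ket 3)"
  by (rule eq_matI) (auto simp: ket_def cc_def less4)

lemma F5: "s < 4 \<Longrightarrow> rr * ket s = (1/2) \<cdot>\<^sub>m 1\<^sub>m 1"
  by (rule eq_matI) (auto simp: ket_def rr_def scalar_prod_def sum4 less4)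

lemma F7: "anc_zero 2 * anc_zero 2 = anc_zero 2" "adj (anc_zero 2) = anc_zero 2"
  by (rule eq_matI; auto simp: anc_zero_def scalar_prod_def sum4)+

lemma oq2_proj1: assumes k: "k \<in> {1,2}" shows "on_qubit 2 (k - 1) proj1 = dmat 4 (\<lambda>i. if pbit k i then 1 else 0)"
proof (rule eq_matI)
  fix i j assume "i < dim_row (dmat 4 (\<lambda>i. if pbit k i then 1 else 0))" "j < dim_col (dmat 4 (\<lambda>i. if pbit k i then 1 else 0))"
  then have i: "i \<in> {0,1,2,3}" and j: "j \<in> {0,1,2,3}" by auto
  from k have "k = 1 \<or> k = 2" by auto
  then show "on_qubit 2 (k - 1) proj1 $$ (i,j) = dmat 4 (\<lambda>i. if pbit k i then 1 else 0) $$ (i,j)"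
  proof
    assume k1: "k = 1"
    have "on_qubit 2 (k - 1) proj1 = kron proj1 (1\<^sub>m 2)" unfolding k1 on_qubit_def by simp
    then show ?thesis using i j unfolding k1 by (auto simp: kron_index proj1_def pbit_def)
  next
    assume k2: "k = 2"
    have "on_qubit 2 (k - 1) proj1 = kron (1\<^sub>m 2) proj1" unfolding k2 on_qubit_def by simp
    then show ?thesis using i j unfolding k2 by (auto simp: kron_index proj1_def pbit_def)
  qed
qed (use k in auto)

lemma oq2_proj0: assumes k: "k \<in> {1,2}" shows "on_qubit 2 (k - 1) proj0 = dmat 4 (\<lambda>i. if pbit k i then 0 else 1)"
proof (rule eq_matI)
  fix i j assume "i < dim_row (dmat 4 (\<lambda>i. if pbit k i then 0 else 1))" "j < dim_col (dmat 4 (\<lambda>i. if pbit k i then 0 else 1))"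
  then have i: "i \<in> {0,1,2,3}" and j: "j \<in> {0,1,2,3}" by auto
  from k have "k = 1 \<or> k = 2" by auto
  then show "on_qubit 2 (k - 1) proj0 $$ (i,j) = dmat 4 (\<lambda>i. if pbit k i then 0 else 1) $$ (i,j)"
  proof
    assume k1: "k = 1"
    have "on_qubit 2 (k - 1) proj0 = kron proj0 (1\<^sub>m 2)" unfolding k1 on_qubit_def by simp
    then show ?thesis using i j unfolding k1 by (auto simp: kron_index proj0_def pbit_def)
  next
    assume k2: "k = 2"
    have "on_qubit 2 (k - 1) proj0 = kron (1\<^sub>m 2) proj0" unfolding k2 on_qubit_def by simp
    then show ?thesis using i j unfolding k2 by (auto simp: kron_index proj0_def pbit_def)
  qed
qed (use k in auto)

lemma dmat_ket: "s < 4 \<Longrightarrow> dmat 4 f * ket s = f s \<cdot>\<^sub>m ket s"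
  by (rule eq_matI) (auto simp: ket_def scalar_prod_def atLeast0LessThan)

lemma smult_one_mat': "(1::complex) \<cdot>\<^sub>m A = A" by (rule eq_matI) auto
lemma smult_zero_mat': "(0::complex) \<cdot>\<^sub>m A = 0\<^sub>m (dim_row A) (dim_col A)" by (rule eq_matI) auto

lemma blk_ket: assumes k: "k \<in> {1,2}" and s: "s < 4" and A: "A \<in> carrier_mat d d" and B: "B \<in> carrier_mat d d"
  and M: "M \<in> carrier_mat d e"
  shows "blk k A B * kron M (ket s) = kron ((if pbit k s then A else B) * M) (ket s)"
proof -
  let ?p1 = "on_qubit 2 (k - 1) proj1" let ?p0 = "on_qubit 2 (k - 1) proj0"
  have p1: "?p1 = dmat 4 (\<lambda>i. if pbit k i then 1 else 0)" by (rule oq2_proj1[OF k])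
  have p0: "?p0 = dmat 4 (\<lambda>i. if pbit k i then 0 else 1)" by (rule oq2_proj0[OF k])
  have X: "kron A ?p1 \<in> carrier_mat (d*4) (d*4)" "kron B ?p0 \<in> carrier_mat (d*4) (d*4)"
    unfolding p1 p0 using A B by (auto intro!: kron_carrier)
  have Z: "kron M (ket s) \<in> carrier_mat (d*4) (e*1)" using M by (intro kron_carrier) auto
  have "blk k A B * kron M (ket s) = kron A ?p1 * kron M (ket s) + kron B ?p0 * kron M (ket s)"
    unfolding blk_def by (rule add_mult_distrib_mat[OF X Z])
  also have "\<dots> = kron (A * M) (?p1 * ket s) + kron (B * M) (?p0 * ket s)"
    using A B M unfolding p1 p0 by (simp add: kron_mult)
  also have "\<dots> = kron ((if pbit k s then A else B) * M) (ket s)"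
  proof -
    have cA: "kron (A * M) (ket s) \<in> carrier_mat (d*4) e" using kron_carrier[OF mult_carrier_mat[OF A M] ket_carrier[of s]] by simp
    have cB: "kron (B * M) (ket s) \<in> carrier_mat (d*4) e" using kron_carrier[OF mult_carrier_mat[OF B M] ket_carrier[of s]] by simp
    show ?thesis unfolding p1 p0 dmat_ket[OF s] using A B M cA cB
      by (cases "pbit k s") (simp_all add: smult_one_mat' smult_zero_mat' kron_zero_right)
  qed
  finally show ?thesis .
qed

lemma blk_dims[simp]: "k \<in> {1,2} \<Longrightarrow> A \<in> carrier_mat d d \<Longrightarrow> B \<in> carrier_mat d d \<Longrightarrow> dim_row (blk k A B) = d*4"
  "k \<in> {1,2} \<Longrightarrow> A \<in> carrier_mat d d \<Longrightarrow> B \<in> carrier_mat d d \<Longrightarrow> dim_col (blk k A B) = d*4"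
  using blk_carrier[of k A d B] by (auto simp only: carrier_mat_def mem_Collect_eq)

lemma layer1_eq: assumes "C 1 \<in> carrier_mat (2^n) (2^n)" "C 2 \<in> carrier_mat (2^n) (2^n)"
  shows "layer1_full n 2 C = blk 1 (C 1) (1\<^sub>m (2^n)) * blk 2 (C 2) (1\<^sub>m (2^n))"
proof -
  have c: "blk 2 (C 2) (1\<^sub>m (2^n)) \<in> carrier_mat (2^n*4) (2^n*4)" using assms by simp
  have "[1..<Suc 2] = [1,2]" by (simp add: upt_rec)
  then show ?thesis unfolding layer1_full_def using c by (simp add: ctrl_blk)
qed

lemma layer2_eq: assumes "C 1 \<in> carrier_mat (2^n) (2^n)" "C 2 \<in> carrier_mat (2^n) (2^n)"
  shows "layer2_full n 2 C = blk 2 (C 2) (1\<^sub>m (2^n)) * blk 1 (C 1) (1\<^sub>m (2^n))"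
proof -
  have c: "blk 2 (C 2) (1\<^sub>m (2^n)) \<in> carrier_mat (2^n*4) (2^n*4)" using assms by simp
  have "[1..<Suc 2] = [1,2]" by (simp add: upt_rec)
  then show ?thesis unfolding layer2_full_def using c by (simp add: ctrl_blk)
qed

definition bsel :: "nat \<Rightarrow> nat \<Rightarrow> (nat \<Rightarrow> complex mat) \<Rightarrow> nat \<Rightarrow> complex mat" where
  "bsel n k C s = (if pbit k s then C k else 1\<^sub>m (2^n))"

lemma bsel_carrier[simp]: "C k \<in> carrier_mat (2^n) (2^n) \<Longrightarrow> bsel n k C s \<in> carrier_mat (2^n) (2^n)"
  by (simp add: bsel_def)

lemma bsel_dims[simp]: "C k \<in> carrier_mat (2^n) (2^n) \<Longrightarrow> dim_row (bsel n k C s) = 2^n"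
  "C k \<in> carrier_mat (2^n) (2^n) \<Longrightarrow> dim_col (bsel n k C s) = 2^n"
  by (auto simp: bsel_def)

definition Zf :: "nat \<Rightarrow> (nat \<Rightarrow> complex mat) \<Rightarrow> (nat \<Rightarrow> complex mat) \<Rightarrow> complex mat \<Rightarrow> complex mat \<Rightarrow> nat \<Rightarrow> complex mat" where
  "Zf n C1 C2 E U s = bsel n 2 C2 s * (bsel n 1 C2 s * (E * (U * (bsel n 1 C1 s * bsel n 2 C1 s))))"

lemma Mtot_ket: assumes C1: "C1 1 \<in> carrier_mat (2^n) (2^n)" "C1 2 \<in> carrier_mat (2^n) (2^n)"
  and C2: "C2 1 \<in> carrier_mat (2^n) (2^n)" "C2 2 \<in> carrier_mat (2^n) (2^n)"
  and E: "E \<in> carrier_mat (2^n) (2^n)" and U: "U \<in> carrier_mat (2^n) (2^n)" and s: "s < 4"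
  shows "layer2_full n 2 C2 * (kron E (1\<^sub>m 4) * (kron U (1\<^sub>m 4) * (layer1_full n 2 C1 * kron (1\<^sub>m (2^n)) (ket s))))
    = kron (Zf n C1 C2 E U s) (ket s)"
proof -
  let ?d = "2^n"
  have I: "1\<^sub>m ?d \<in> carrier_mat ?d ?d" by simp
  note bk = blk_ket[where d = ?d and e = ?d, OF _ s]
  have b1: "blk 1 (C1 1) (1\<^sub>m ?d) * (blk 2 (C1 2) (1\<^sub>m ?d) * kron (1\<^sub>m ?d) (ket s))
      = kron (bsel n 1 C1 s * (bsel n 2 C1 s * 1\<^sub>m ?d)) (ket s)"
    using C1 by (simp add: bk bsel_def)
  have b2: "kron U (1\<^sub>m 4) * kron X (ket s) = kron (U * X) (ket s)" if "X \<in> carrier_mat ?d ?d" for X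
    using that U by (simp add: kron_mult)
  have b3: "kron E (1\<^sub>m 4) * kron X (ket s) = kron (E * X) (ket s)" if "X \<in> carrier_mat ?d ?d" for X
    using that E by (simp add: kron_mult)
  have b4: "blk 2 (C2 2) (1\<^sub>m ?d) * (blk 1 (C2 1) (1\<^sub>m ?d) * kron X (ket s)) = kron (bsel n 2 C2 s * (bsel n 1 C2 s * X)) (ket s)"
    if "X \<in> carrier_mat ?d ?d" for X
    using that C2 by (simp add: bk bsel_def)
  have Kc: "kron (1\<^sub>m ?d) (ket s) \<in> carrier_mat (?d*4) ?d" using kron_carrier[OF I ket_carrier[of s]] by simp
  have "layer1_full n 2 C1 * kron (1\<^sub>m ?d) (ket s) = kron (bsel n 1 C1 s * (bsel n 2 C1 s * 1\<^sub>m ?d)) (ket s)"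
    unfolding layer1_eq[OF C1] using C1 Kc b1 by simp
  moreover have "layer2_full n 2 C2 * kron X (ket s) = kron (bsel n 2 C2 s * (bsel n 1 C2 s * X)) (ket s)"
    if "X \<in> carrier_mat ?d ?d" for X
  proof -
    have "dim_row X = ?d" "dim_col X = ?d" using that by auto
    then show ?thesis unfolding layer2_eq[OF C2] using C2 b4[OF that] by simp
  qed
  ultimately have L1K: "layer1_full n 2 C1 * kron (1\<^sub>m ?d) (ket s) = kron (bsel n 1 C1 s * (bsel n 2 C1 s * 1\<^sub>m ?d)) (ket s)"
    and L2K: "\<And>X. X \<in> carrier_mat ?d ?d \<Longrightarrow> layer2_full n 2 C2 * kron X (ket s) = kron (bsel n 2 C2 s * (bsel n 1 C2 s * X)) (ket s)"
    by auto
  define B where "B = bsel n 1 C1 s * (bsel n 2 C1 s * 1\<^sub>m ?d)"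
  have b1c: "bsel n 1 C1 s \<in> carrier_mat ?d ?d" using C1 by simp
  have b2c: "bsel n 2 C1 s \<in> carrier_mat ?d ?d" using C1 by simp
  have Bc: "B \<in> carrier_mat ?d ?d" unfolding B_def by (rule mult_carrier_mat[OF b1c mult_carrier_mat[OF b2c one_carrier_mat]])
  have UBc: "U * B \<in> carrier_mat ?d ?d" using U Bc by (rule mult_carrier_mat)
  have EUBc: "E * (U * B) \<in> carrier_mat ?d ?d" using E UBc by (rule mult_carrier_mat)
  have "layer2_full n 2 C2 * (kron E (1\<^sub>m 4) * (kron U (1\<^sub>m 4) * (layer1_full n 2 C1 * kron (1\<^sub>m ?d) (ket s))))
     = kron (bsel n 2 C2 s * (bsel n 1 C2 s * (E * (U * B)))) (ket s)"
    unfolding L1K B_def[symmetric] b2[OF Bc] b3[OF UBc] L2K[OF EUBc] ..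
  also have "B = bsel n 1 C1 s * bsel n 2 C1 s"
    unfolding B_def using C1 by simp
  finally show ?thesis by (simp add: Zf_def)
qed

lemma sq_mult: "A \<in> carrier_mat d d \<Longrightarrow> B \<in> carrier_mat d d \<Longrightarrow> A * B \<in> carrier_mat d d"
  by (rule mult_carrier_mat)

lemma lin4: fixes M :: "complex mat" assumes M: "M \<in> carrier_mat a b" and X: "X0 \<in> carrier_mat b e" "X1 \<in> carrier_mat b e" "X2 \<in> carrier_mat b e" "X3 \<in> carrier_mat b e"
  shows "M * (c \<cdot>\<^sub>m (X0 + X1 + X2 + X3)) = c \<cdot>\<^sub>m (M * X0 + M * X1 + M * X2 + M * X3)"
proof -
  have S: "X0 + X1 + X2 + X3 \<in> carrier_mat b e" using X by simp
  have "M * (c \<cdot>\<^sub>m (X0 + X1 + X2 + X3)) = c \<cdot>\<^sub>m (M * (X0 + X1 + X2 + X3))"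
    by (rule mult_smult_distrib[OF M S])
  also have "M * (X0 + X1 + X2 + X3) = M * (X0 + X1 + X2) + M * X3"
    using M X by (intro mult_add_distrib_mat) auto
  also have "M * (X0 + X1 + X2) = M * (X0 + X1) + M * X2"
    using M X by (intro mult_add_distrib_mat) auto
  also have "M * (X0 + X1) = M * X0 + M * X1"
    using M X by (intro mult_add_distrib_mat) auto
  finally show ?thesis .
qed

definition Ymat :: "nat \<Rightarrow> (nat \<Rightarrow> complex mat) \<Rightarrow> (nat \<Rightarrow> complex mat) \<Rightarrow> complex mat \<Rightarrow> complex mat \<Rightarrow> complex mat" where
  "Ymat n C1 C2 E U = (1/2) \<cdot>\<^sub>m ((1/2) \<cdot>\<^sub>m Zf n C1 C2 E U 0 + (1/2) \<cdot>\<^sub>m Zf n C1 C2 E U 1 + (1/2) \<cdot>\<^sub>m Zf n C1 C2 E U 2 + (1/2) \<cdot>\<^sub>m Zf n C1 C2 E U 3)"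

lemma Zf_carrier: assumes C1: "C1 1 \<in> carrier_mat (2^n) (2^n)" "C1 2 \<in> carrier_mat (2^n) (2^n)"
  and C2: "C2 1 \<in> carrier_mat (2^n) (2^n)" "C2 2 \<in> carrier_mat (2^n) (2^n)"
  and E: "E \<in> carrier_mat (2^n) (2^n)" and U: "U \<in> carrier_mat (2^n) (2^n)"
  shows "Zf n C1 C2 E U s \<in> carrier_mat (2^n) (2^n)"
proof -
  have b: "bsel n 1 C1 s \<in> carrier_mat (2^n) (2^n)" "bsel n 2 C1 s \<in> carrier_mat (2^n) (2^n)"
    "bsel n 1 C2 s \<in> carrier_mat (2^n) (2^n)" "bsel n 2 C2 s \<in> carrier_mat (2^n) (2^n)" using C1 C2 by auto
  show ?thesis unfolding Zf_def
    by (intro sq_mult b E U)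
qed

lemma Y_core: assumes C1: "C1 1 \<in> carrier_mat (2^n) (2^n)" "C1 2 \<in> carrier_mat (2^n) (2^n)"
  and C2: "C2 1 \<in> carrier_mat (2^n) (2^n)" "C2 2 \<in> carrier_mat (2^n) (2^n)"
  and E: "E \<in> carrier_mat (2^n) (2^n)" and U: "U \<in> carrier_mat (2^n) (2^n)"
  shows "kron (1\<^sub>m (2^n)) rr * (layer2_full n 2 C2 * (kron E (1\<^sub>m 4) * (kron U (1\<^sub>m 4) * (layer1_full n 2 C1 * kron (1\<^sub>m (2^n)) cc))))
     = Ymat n C1 C2 E U"
proof -
  let ?d = "2^n"
  let ?Z = "Zf n C1 C2 E U"
  have I: "1\<^sub>m ?d \<in> carrier_mat ?d ?d" by simp
  define Mt where "Mt = layer2_full n 2 C2 * (kron E (1\<^sub>m 4) * (kron U (1\<^sub>m 4) * layer1_full n 2 C1))"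
  have L1c: "layer1_full n 2 C1 \<in> carrier_mat (?d*4) (?d*4)" unfolding layer1_eq[OF C1]
    by (rule sq_mult) (use C1 in simp_all)
  have L2c: "layer2_full n 2 C2 \<in> carrier_mat (?d*4) (?d*4)" unfolding layer2_eq[OF C2]
    by (rule sq_mult) (use C2 in simp_all)
  have kU: "kron U (1\<^sub>m 4) \<in> carrier_mat (?d*4) (?d*4)" using kron_carrier[OF U one_carrier_mat] by simp
  have kE: "kron E (1\<^sub>m 4) \<in> carrier_mat (?d*4) (?d*4)" using kron_carrier[OF E one_carrier_mat] by simp
  have Mtc: "Mt \<in> carrier_mat (?d*4) (?d*4)" unfolding Mt_def
    by (intro sq_mult L1c L2c kU kE)
  have Kc: "\<And>s. kron (1\<^sub>m ?d) (ket s) \<in> carrier_mat (?d*4) ?d" using kron_carrier[OF I ket_carrier] by simp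
  have MK: "Mt * kron (1\<^sub>m ?d) (ket s) = kron (?Z s) (ket s)" if s: "s < 4" for s
  proof -
    have "Mt * kron (1\<^sub>m ?d) (ket s) = layer2_full n 2 C2 * (kron E (1\<^sub>m 4) * (kron U (1\<^sub>m 4) * (layer1_full n 2 C1 * kron (1\<^sub>m ?d) (ket s))))"
      unfolding Mt_def using L1c[THEN cdim(1)] L1c[THEN cdim(2)] L2c[THEN cdim(1)] L2c[THEN cdim(2)]
        kU[THEN cdim(1)] kU[THEN cdim(2)] kE[THEN cdim(1)] kE[THEN cdim(2)] Kc[of s, THEN cdim(1)] by simp
    also have "\<dots> = kron (?Z s) (ket s)" by (rule Mtot_ket[OF C1 C2 E U s])
    finally show ?thesis .
  qed
  have lhs: "kron (1\<^sub>m (2^n)) rr * (layer2_full n 2 C2 * (kron E (1\<^sub>m 4) * (kron U (1\<^sub>m 4) * (layer1_full n 2 C1 * kron (1\<^sub>m (2^n)) cc))))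
      = kron (1\<^sub>m ?d) rr * (Mt * kron (1\<^sub>m ?d) cc)"
    unfolding Mt_def using L1c[THEN cdim(1)] L1c[THEN cdim(2)] L2c[THEN cdim(1)] L2c[THEN cdim(2)]
        kU[THEN cdim(1)] kU[THEN cdim(2)] kE[THEN cdim(1)] kE[THEN cdim(2)] by simp
  have kcc: "kron (1\<^sub>m ?d) cc = (1/2) \<cdot>\<^sub>m (kron (1\<^sub>m ?d) (ket 0) + kron (1\<^sub>m ?d) (ket 1) + kron (1\<^sub>m ?d) (ket 2) + kron (1\<^sub>m ?d) (ket 3))"
    unfolding F4 by (simp add: kron_smult_right kron_add_right)
  have Zc: "\<And>s. ?Z s \<in> carrier_mat ?d ?d" by (rule Zf_carrier[OF C1 C2 E U])
  have ZK: "\<And>s. kron (?Z s) (ket s) \<in> carrier_mat (?d*4) ?d" using kron_carrier[OF Zc ket_carrier] by simp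
  have rrc: "kron (1\<^sub>m ?d) rr \<in> carrier_mat ?d (?d*4)" using kron_carrier[OF I rr_carrier] by simp
  have rZ: "kron (1\<^sub>m ?d) rr * kron (?Z s) (ket s) = (1/2) \<cdot>\<^sub>m ?Z s" if s: "s < 4" for s
  proof -
    have "kron (1\<^sub>m ?d) rr * kron (?Z s) (ket s) = kron (1\<^sub>m ?d * ?Z s) (rr * ket s)"
      using Zc[of s] by (simp add: kron_mult)
    also have "\<dots> = (1/2) \<cdot>\<^sub>m ?Z s" using Zc[of s] s by (simp add: F5 kron_smult_right)
    finally show ?thesis .
  qed
  have "kron (1\<^sub>m ?d) rr * (Mt * kron (1\<^sub>m ?d) cc)
      = kron (1\<^sub>m ?d) rr * ((1/2) \<cdot>\<^sub>m (kron (?Z 0) (ket 0) + kron (?Z 1) (ket 1) + kron (?Z 2) (ket 2) + kron (?Z 3) (ket 3)))"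
    unfolding kcc lin4[OF Mtc Kc Kc Kc Kc] by (simp add: MK)
  also have "\<dots> = Ymat n C1 C2 E U"
    unfolding lin4[OF rrc ZK ZK ZK ZK] Ymat_def by (simp add: rZ)
  finally show ?thesis using lhs by simp
qed

lemma Ymat_carrier: assumes C1: "C1 1 \<in> carrier_mat (2^n) (2^n)" "C1 2 \<in> carrier_mat (2^n) (2^n)"
  and C2: "C2 1 \<in> carrier_mat (2^n) (2^n)" "C2 2 \<in> carrier_mat (2^n) (2^n)"
  and E: "E \<in> carrier_mat (2^n) (2^n)" and U: "U \<in> carrier_mat (2^n) (2^n)"
  shows "Ymat n C1 C2 E U \<in> carrier_mat (2^n) (2^n)"
  unfolding Ymat_def using Zf_carrier[OF C1 C2 E U] by simp

lemma W_a0: assumes C1: "C1 1 \<in> carrier_mat (2^n) (2^n)" "C1 2 \<in> carrier_mat (2^n) (2^n)"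
  and C2: "C2 1 \<in> carrier_mat (2^n) (2^n)" "C2 2 \<in> carrier_mat (2^n) (2^n)"
  and E: "E \<in> carrier_mat (2^n) (2^n)" and U: "U \<in> carrier_mat (2^n) (2^n)"
  shows "kron (1\<^sub>m (2^n)) (anc_zero 2) * (kron (1\<^sub>m (2^n)) (hpow 2) * layer2_full n 2 C2) * kron E (1\<^sub>m 4)
     * (kron U (1\<^sub>m 4) * layer1_full n 2 C1 * kron (1\<^sub>m (2^n)) (hpow 2)) * kron (1\<^sub>m (2^n)) (anc_zero 2)
     = kron (Ymat n C1 C2 E U) (anc_zero 2)"
proof -
  let ?d = "2^n"
  let ?I = "1\<^sub>m ?d"
  have I: "?I \<in> carrier_mat ?d ?d" by simp
  have L1c: "layer1_full n 2 C1 \<in> carrier_mat (?d*4) (?d*4)" unfolding layer1_eq[OF C1]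
    by (rule sq_mult) (use C1 in simp_all)
  have L2c: "layer2_full n 2 C2 \<in> carrier_mat (?d*4) (?d*4)" unfolding layer2_eq[OF C2]
    by (rule sq_mult) (use C2 in simp_all)
  have kU: "kron U (1\<^sub>m 4) \<in> carrier_mat (?d*4) (?d*4)" using kron_carrier[OF U one_carrier_mat] by simp
  have kE: "kron E (1\<^sub>m 4) \<in> carrier_mat (?d*4) (?d*4)" using kron_carrier[OF E one_carrier_mat] by simp
  have Pa: "kron ?I (anc_zero 2) \<in> carrier_mat (?d*4) (?d*4)" using kron_carrier[OF I a0_carrier] by simp
  have Hd: "kron ?I (hpow 2) \<in> carrier_mat (?d*4) (?d*4)" using kron_carrier[OF I HH_carrier] by simp
  have kcc: "kron ?I cc \<in> carrier_mat (?d*4) ?d" using kron_carrier[OF I cc_carrier] by simp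
  have krr: "kron ?I rr \<in> carrier_mat ?d (?d*4)" using kron_carrier[OF I rr_carrier] by simp
  have kk0: "kron ?I (ket 0) \<in> carrier_mat (?d*4) ?d" using kron_carrier[OF I ket_carrier] by simp
  have kb0: "kron ?I bra0 \<in> carrier_mat ?d (?d*4)" using kron_carrier[OF I bra0_carrier] by simp
  have Yc: "Ymat n C1 C2 E U \<in> carrier_mat ?d ?d" by (rule Ymat_carrier[OF C1 C2 E U])
  have PH: "kron ?I (anc_zero 2) * kron ?I (hpow 2) = kron ?I (ket 0) * kron ?I rr"
    by (simp add: kron_mult F1)
  have HP: "kron ?I (hpow 2) * kron ?I (anc_zero 2) = kron ?I cc * kron ?I bra0"
    by (simp add: kron_mult F2)
  note dims = L1c[THEN cdim(1)] L1c[THEN cdim(2)] L2c[THEN cdim(1)] L2c[THEN cdim(2)]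
        kU[THEN cdim(1)] kU[THEN cdim(2)] kE[THEN cdim(1)] kE[THEN cdim(2)]
        Pa[THEN cdim(1)] Pa[THEN cdim(2)] Hd[THEN cdim(1)] Hd[THEN cdim(2)]
        kcc[THEN cdim(1)] kcc[THEN cdim(2)] krr[THEN cdim(1)] krr[THEN cdim(2)]
        kk0[THEN cdim(1)] kk0[THEN cdim(2)] kb0[THEN cdim(1)] kb0[THEN cdim(2)] Yc[THEN cdim(1)] Yc[THEN cdim(2)]
  have PH': "kron ?I (anc_zero 2) * (kron ?I (hpow 2) * X) = kron ?I (ket 0) * (kron ?I rr * X)"
    if "dim_row X = ?d * 4" for X
  proof -
    have "kron ?I (anc_zero 2) * (kron ?I (hpow 2) * X) = (kron ?I (anc_zero 2) * kron ?I (hpow 2)) * X"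
      using that dims by (simp del: massoc add: massoc[symmetric])
    also have "\<dots> = kron ?I (ket 0) * (kron ?I rr * X)" unfolding PH using that dims by simp
    finally show ?thesis .
  qed
  have "kron ?I (anc_zero 2) * (kron ?I (hpow 2) * layer2_full n 2 C2) * kron E (1\<^sub>m 4)
     * (kron U (1\<^sub>m 4) * layer1_full n 2 C1 * kron ?I (hpow 2)) * kron ?I (anc_zero 2)
     = kron ?I (ket 0) * (kron ?I rr * (layer2_full n 2 C2 * (kron E (1\<^sub>m 4) * (kron U (1\<^sub>m 4) * (layer1_full n 2 C1 * (kron ?I cc * kron ?I bra0))))))"
    using dims by (simp add: PH' HP)
  also have "kron ?I rr * (layer2_full n 2 C2 * (kron E (1\<^sub>m 4) * (kron U (1\<^sub>m 4) * (layer1_full n 2 C1 * (kron ?I cc * kron ?I bra0)))))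
     = Ymat n C1 C2 E U * kron ?I bra0"
    unfolding Y_core[OF C1 C2 E U, symmetric] using dims by simp
  also have "kron ?I (ket 0) * (Ymat n C1 C2 E U * kron ?I bra0) = kron (?I * Ymat n C1 C2 E U * ?I) (ket 0 * 1\<^sub>m 1 * bra0)"
  proof -
    let ?Y = "Ymat n C1 C2 E U"
    have Yk: "kron ?Y (1\<^sub>m 1) = ?Y" by (rule kron_one_right)
    have "kron ?I (ket 0) * (?Y * kron ?I bra0) = (kron ?I (ket 0) * kron ?Y (1\<^sub>m 1)) * kron ?I bra0"
      unfolding Yk using dims by (simp del: massoc add: massoc[symmetric])
    also have "kron ?I (ket 0) * kron ?Y (1\<^sub>m 1) = kron (?I * ?Y) (ket 0 * 1\<^sub>m 1)"
      by (rule kron_mult) (use dims in simp_all)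
    also have "kron (?I * ?Y) (ket 0 * 1\<^sub>m 1) * kron ?I bra0 = kron (?I * ?Y * ?I) (ket 0 * 1\<^sub>m 1 * bra0)"
      by (rule kron_mult) (use dims in simp_all)
    finally show ?thesis .
  qed
  also have "\<dots> = kron (Ymat n C1 C2 E U) (anc_zero 2)"
    using Yc by (simp add: F3)
  finally show ?thesis .
qed

definition Vc :: "nat \<Rightarrow> nat \<Rightarrow> complex mat" where
  "Vc n k = (if k = 1 then tp n pauliX else tp n Ym)"

definition C1c :: "nat \<Rightarrow> complex mat \<Rightarrow> nat \<Rightarrow> complex mat" where
  "C1c n U k = adj U * adj (Vc n k) * U"

lemma Vc_unitary: "unitary_mat (2^n) (Vc n k)"
  unfolding Vc_def using tp_unitary[OF pauliX_unitary] tp_unitary[OF Ym_unitary] by simp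

lemma Vc_carrier[simp]: "Vc n k \<in> carrier_mat (2^n) (2^n)"
  using Vc_unitary unitary_carrier by blast

lemma Vc_dims[simp]: "dim_row (Vc n k) = 2^n" "dim_col (Vc n k) = 2^n"
  using Vc_carrier[of n k] by (auto simp only: carrier_mat_def mem_Collect_eq)

lemma C1c_carrier: "U \<in> carrier_mat (2^n) (2^n) \<Longrightarrow> C1c n U k \<in> carrier_mat (2^n) (2^n)"
  unfolding C1c_def by (intro sq_mult adj_carrier Vc_carrier) auto

lemma Zf_vals: assumes uU: "unitary_mat (2^n) U" and E: "E \<in> carrier_mat (2^n) (2^n)"
  shows "Zf n (C1c n U) (Vc n) E U 0 = E * U"
    "Zf n (C1c n U) (Vc n) E U 1 = (Vc n 2 * E * adj (Vc n 2)) * U"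
    "Zf n (C1c n U) (Vc n) E U 2 = (Vc n 1 * E * adj (Vc n 1)) * U"
    "Zf n (C1c n U) (Vc n) E U 3 = (Vc n 2 * (Vc n 1 * E * adj (Vc n 1)) * adj (Vc n 2)) * U"
proof -
  have U: "U \<in> carrier_mat (2^n) (2^n)" using uU by (rule unitary_carrier)
  have d: "dim_row U = 2^n" "dim_col U = 2^n" "dim_row E = 2^n" "dim_col E = 2^n" using U E by auto
  have c2: "U * (adj U * X) = X" if "dim_row X = 2^n" for X by (rule unitary_cancel2[OF uU that])
  show "Zf n (C1c n U) (Vc n) E U 0 = E * U"
    unfolding Zf_def bsel_def pbit_def using d by simp
  show "Zf n (C1c n U) (Vc n) E U 1 = (Vc n 2 * E * adj (Vc n 2)) * U"
    unfolding Zf_def bsel_def pbit_def C1c_def using d by (simp add: c2)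
  show "Zf n (C1c n U) (Vc n) E U 2 = (Vc n 1 * E * adj (Vc n 1)) * U"
    unfolding Zf_def bsel_def pbit_def C1c_def using d by (simp add: c2)
  show "Zf n (C1c n U) (Vc n) E U 3 = (Vc n 2 * (Vc n 1 * E * adj (Vc n 1)) * adj (Vc n 2)) * U"
    unfolding Zf_def bsel_def pbit_def C1c_def using d by (simp add: c2)
qed

lemma Ymat_val: assumes uU: "unitary_mat (2^n) U" and q: "q < n" and A: "A \<in> carrier_mat 2 2"
  shows "Ymat n (C1c n U) (Vc n) (on_qubit n q A) U = ((A $$ (0,0) + A $$ (1,1)) / 2) \<cdot>\<^sub>m U"
proof -
  let ?E = "on_qubit n q A"
  let ?Z = "Zf n (C1c n U) (Vc n) ?E U"
  let ?d = "2^n"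
  have U: "U \<in> carrier_mat ?d ?d" using uU by (rule unitary_carrier)
  have E: "?E \<in> carrier_mat ?d ?d" using A q by simp
  have C1: "C1c n U 1 \<in> carrier_mat ?d ?d" "C1c n U 2 \<in> carrier_mat ?d ?d" using C1c_carrier[OF U] by auto
  have C2: "Vc n 1 \<in> carrier_mat ?d ?d" "Vc n 2 \<in> carrier_mat ?d ?d" by auto
  have Zc: "\<And>s. ?Z s \<in> carrier_mat ?d ?d" by (rule Zf_carrier[OF C1 C2 E U])
  have a: "Ymat n (C1c n U) (Vc n) ?E U = (1/4) \<cdot>\<^sub>m (?Z 0 + ?Z 2 + ?Z 1 + ?Z 3)"
  proof -
    have Zd: "\<And>s. dim_row (?Z s) = ?d" "\<And>s. dim_col (?Z s) = ?d" using Zc by auto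
    show ?thesis unfolding Ymat_def by (rule eq_matI) (simp_all add: Zd algebra_simps)
  qed
  let ?M1 = "Vc n 1 * ?E * adj (Vc n 1)"
  let ?M2 = "Vc n 2 * ?E * adj (Vc n 2)"
  let ?M3 = "Vc n 2 * ?M1 * adj (Vc n 2)"
  have M1: "?M1 = on_qubit n q (pauliX * A * adj pauliX)"
    unfolding Vc_def using tp_conj[OF q A pauliX_unitary] by simp
  have M2: "?M2 = on_qubit n q (Ym * A * adj Ym)"
    unfolding Vc_def using tp_conj[OF q A Ym_unitary] by simp
  have M3: "?M3 = on_qubit n q (Ym * (pauliX * A * adj pauliX) * adj Ym)"
    unfolding M1 using tp_conj[OF q _ Ym_unitary, of "pauliX * A * adj pauliX"] A by (simp add: Vc_def)
  have Mc: "?M1 \<in> carrier_mat ?d ?d" "?M2 \<in> carrier_mat ?d ?d" "?M3 \<in> carrier_mat ?d ?d"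
  proof -
    show "?M1 \<in> carrier_mat ?d ?d" unfolding M1 using A q by simp
    show "?M2 \<in> carrier_mat ?d ?d" unfolding M2 using A q by simp
    show "?M3 \<in> carrier_mat ?d ?d" by (subst M3) (use A q in simp)
  qed
  have "?Z 0 + ?Z 2 + ?Z 1 + ?Z 3 = (?E + ?M1 + ?M2 + ?M3) * U"
  proof -
    have s1: "(?E + ?M1 + ?M2 + ?M3) * U = (?E + ?M1 + ?M2) * U + ?M3 * U"
      by (rule add_mult_distrib_mat[OF _ Mc(3) U]) (use E Mc in simp)
    have s2: "(?E + ?M1 + ?M2) * U = (?E + ?M1) * U + ?M2 * U"
      by (rule add_mult_distrib_mat[OF _ Mc(2) U]) (use E Mc in simp)
    have s3: "(?E + ?M1) * U = ?E * U + ?M1 * U"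
      by (rule add_mult_distrib_mat[OF E Mc(1) U])
    show ?thesis unfolding Zf_vals[OF uU E] s1 s2 s3 ..
  qed
  also have "?E + ?M1 + ?M2 + ?M3 = on_qubit n q (A + pauliX * A * adj pauliX + Ym * A * adj Ym + Ym * (pauliX * A * adj pauliX) * adj Ym)"
    apply (subst M3, subst M1, subst M2)
    using A by (simp add: on_qubit_add)
  also have "\<dots> = (2 * (A $$ (0,0) + A $$ (1,1))) \<cdot>\<^sub>m 1\<^sub>m ?d"
    unfolding pauli_twirl[OF A] on_qubit_smult on_qubit_one[OF q] ..
  finally have b: "?Z 0 + ?Z 2 + ?Z 1 + ?Z 3 = (2 * (A $$ (0,0) + A $$ (1,1))) \<cdot>\<^sub>m 1\<^sub>m ?d * U" .
  show ?thesis unfolding a b using U by (intro eq_matI) (auto simp: algebra_simps)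
qed

lemma term_eq:
  fixes P V1 V2 kE \<sigma>0 :: "complex mat"
  assumes D: "P \<in> carrier_mat D D" "V1 \<in> carrier_mat D D" "V2 \<in> carrier_mat D D" "kE \<in> carrier_mat D D" "\<sigma>0 \<in> carrier_mat D D"
    and hP: "adj P = P" and s0: "P * \<sigma>0 * P = \<sigma>0"
  shows "P * (V2 * (kE * (V1 * \<sigma>0 * adj V1) * adj kE) * adj V2) * P
       = (P * V2 * kE * V1 * P) * \<sigma>0 * adj (P * V2 * kE * V1 * P)"
proof -
  have d: "dim_row P = D" "dim_col P = D" "dim_row V1 = D" "dim_col V1 = D" "dim_row V2 = D" "dim_col V2 = D"
    "dim_row kE = D" "dim_col kE = D" "dim_row \<sigma>0 = D" "dim_col \<sigma>0 = D" using D by auto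
  have s0': "P * (\<sigma>0 * (P * Y)) = \<sigma>0 * Y" if "dim_row Y = D" for Y
  proof -
    have "P * (\<sigma>0 * (P * Y)) = (P * \<sigma>0 * P) * Y" using d that by simp
    then show ?thesis using s0 by simp
  qed
  show ?thesis using d by (simp add: adj_mult hP s0')
qed

lemma kraus_sum:
  fixes P V1 V2 \<sigma>0 M :: "complex mat" and kE :: "complex mat \<Rightarrow> complex mat"
  assumes D: "P \<in> carrier_mat D D" "V1 \<in> carrier_mat D D" "V2 \<in> carrier_mat D D" "\<sigma>0 \<in> carrier_mat D D"
    and hP: "adj P = P" and s0: "P * \<sigma>0 * P = \<sigma>0"
    and Mc: "M \<in> carrier_mat d d" and a0: "a \<in> carrier_mat 4 4" and DD: "D = d * 4"
    and val: "\<forall>E\<in>set Ks. kE E \<in> carrier_mat D D \<and> (\<exists>y. (P * V2 * kE E * V1 * P) * \<sigma>0 * adj (P * V2 * kE E * V1 * P) = kron ((complex_of_real y) \<cdot>\<^sub>m M) a)"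
  shows "\<exists>y::real. P * (V2 * apply_kraus (map kE Ks) (V1 * \<sigma>0 * adj V1) * adj V2) * P = kron (complex_of_real y \<cdot>\<^sub>m M) a"
  using val
proof (induction Ks)
  case Nil
  have s1: "V1 * \<sigma>0 * adj V1 \<in> carrier_mat D D" by (intro sq_mult adj_carrier D)
  have "P * (V2 * apply_kraus (map kE []) (V1 * \<sigma>0 * adj V1) * adj V2) * P = 0\<^sub>m D D"
    unfolding apply_kraus_def using D s1 by simp
  also have "\<dots> = kron (complex_of_real 0 \<cdot>\<^sub>m M) a"
    using Mc a0 DD by (simp add: smult_zero_mat' kron_zero_left)
  finally show ?case by blast
next
  case (Cons E Ks)
  from Cons.prems have kc: "kE E \<in> carrier_mat D D" and ex: "\<exists>y. (P * V2 * kE E * V1 * P) * \<sigma>0 * adj (P * V2 * kE E * V1 * P) = kron ((complex_of_real y) \<cdot>\<^sub>m M) a"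
    and rest: "\<forall>E\<in>set Ks. kE E \<in> carrier_mat D D \<and> (\<exists>y. (P * V2 * kE E * V1 * P) * \<sigma>0 * adj (P * V2 * kE E * V1 * P) = kron ((complex_of_real y) \<cdot>\<^sub>m M) a)"
    by auto
  from ex obtain y1 where y1: "(P * V2 * kE E * V1 * P) * \<sigma>0 * adj (P * V2 * kE E * V1 * P) = kron ((complex_of_real y1) \<cdot>\<^sub>m M) a" by blast
  from Cons.IH[OF rest] obtain y2 where y2: "P * (V2 * apply_kraus (map kE Ks) (V1 * \<sigma>0 * adj V1) * adj V2) * P = kron (complex_of_real y2 \<cdot>\<^sub>m M) a" by blast
  let ?s1 = "V1 * \<sigma>0 * adj V1"
  have s1: "?s1 \<in> carrier_mat D D" by (intro sq_mult adj_carrier D)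
  have akc: "apply_kraus (map kE Ks) ?s1 \<in> carrier_mat D D"
  proof -
    have "foldr (\<lambda>E acc. E * ?s1 * adj E + acc) (map kE Ks) (0\<^sub>m D D) \<in> carrier_mat D D"
      by (induction Ks) auto
    moreover have "dim_row V1 = D" using D by auto
    ultimately show ?thesis unfolding apply_kraus_def using s1 by simp
  qed
  have T: "kE E * ?s1 * adj (kE E) \<in> carrier_mat D D" by (intro sq_mult adj_carrier kc D)
  have step: "apply_kraus (map kE (E # Ks)) ?s1 = kE E * ?s1 * adj (kE E) + apply_kraus (map kE Ks) ?s1"
    unfolding apply_kraus_def by simp
  have "P * (V2 * apply_kraus (map kE (E # Ks)) ?s1 * adj V2) * P
      = P * (V2 * (kE E * ?s1 * adj (kE E)) * adj V2) * P + P * (V2 * apply_kraus (map kE Ks) ?s1 * adj V2) * P"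
  proof -
    have c1: "V2 * (kE E * ?s1 * adj (kE E)) * adj V2 \<in> carrier_mat D D" by (intro sq_mult adj_carrier D T)
    have c2: "V2 * apply_kraus (map kE Ks) ?s1 * adj V2 \<in> carrier_mat D D" by (intro sq_mult adj_carrier D akc)
    have aV: "adj V2 \<in> carrier_mat D D" using D by auto
    have v1: "V2 * (kE E * ?s1 * adj (kE E)) \<in> carrier_mat D D" by (intro sq_mult D T)
    have v2: "V2 * apply_kraus (map kE Ks) ?s1 \<in> carrier_mat D D" by (intro sq_mult D akc)
    have h: "V2 * (kE E * ?s1 * adj (kE E) + apply_kraus (map kE Ks) ?s1) * adj V2
       = V2 * (kE E * ?s1 * adj (kE E)) * adj V2 + V2 * apply_kraus (map kE Ks) ?s1 * adj V2"
      unfolding mult_add_distrib_mat[OF D(3) T akc] by (rule add_mult_distrib_mat[OF v1 v2 aV])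
    have pc1: "P * (V2 * (kE E * ?s1 * adj (kE E)) * adj V2) \<in> carrier_mat D D" by (intro sq_mult D c1)
    have pc2: "P * (V2 * apply_kraus (map kE Ks) ?s1 * adj V2) \<in> carrier_mat D D" by (intro sq_mult D c2)
    show ?thesis unfolding step h mult_add_distrib_mat[OF D(1) c1 c2] add_mult_distrib_mat[OF pc1 pc2 D(1)] ..
  qed
  also have "P * (V2 * (kE E * ?s1 * adj (kE E)) * adj V2) * P = kron ((complex_of_real y1) \<cdot>\<^sub>m M) a"
    unfolding term_eq[OF D(1-3) kc D(4) hP s0] y1 ..
  finally have "P * (V2 * apply_kraus (map kE (E # Ks)) ?s1 * adj V2) * P = kron ((complex_of_real y1) \<cdot>\<^sub>m M) a + kron (complex_of_real y2 \<cdot>\<^sub>m M) a"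
    unfolding y2 .
  also have "\<dots> = kron (complex_of_real (y1 + y2) \<cdot>\<^sub>m M) a"
    using Mc by (simp add: kron_add_left[symmetric] add_smult_distrib_right_mat[symmetric])
  finally show ?case by blast
qed

lemma tr_smult: "A \<in> carrier_mat d d \<Longrightarrow> tr (c \<cdot>\<^sub>m A) = c * tr A"
  by (simp add: tr_def sum_distrib_left)

lemma tr_cycl: assumes A: "A \<in> carrier_mat a b" and B: "B \<in> carrier_mat b a"
  shows "tr (A * B) = tr (B * A)"
proof -
  have "tr (A * B) = (\<Sum>i<a. \<Sum>k<b. A $$ (i,k) * B $$ (k,i))"
    unfolding tr_def using A B by (simp add: scalar_prod_def atLeast0LessThan)
  also have "\<dots> = (\<Sum>k<b. \<Sum>i<a. B $$ (k,i) * A $$ (i,k))"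
    by (subst sum.swap) (simp add: mult.commute)
  also have "\<dots> = tr (B * A)"
    unfolding tr_def using A B by (simp add: scalar_prod_def atLeast0LessThan)
  finally show ?thesis .
qed

lemma tr_conj: assumes uU: "unitary_mat d U" and r: "\<rho> \<in> carrier_mat d d"
  shows "tr (U * \<rho> * adj U) = tr \<rho>"
proof -
  have U: "U \<in> carrier_mat d d" using uU by (rule unitary_carrier)
  have "tr (U * \<rho> * adj U) = tr (U * (\<rho> * adj U))" using U r by simp
  also have "\<dots> = tr ((\<rho> * adj U) * U)" by (rule tr_cycl[OF U]) (use r U in \<open>auto intro!: mult_carrier_mat\<close>)
  also have "(\<rho> * adj U) * U = \<rho>" using r U uU by (simp add: unitary_adj_mult)
  finally show ?thesis .
qed

lemma tr_kron_a0: assumes M: "M \<in> carrier_mat d d" shows "tr (kron M (anc_zero 2)) = tr M"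
proof -
  have "tr (kron M (anc_zero 2)) = (\<Sum>i<d*4. kron M (anc_zero 2) $$ (i,i))"
    unfolding tr_def using M by simp
  also have "\<dots> = (\<Sum>x<d. \<Sum>y<4. kron M (anc_zero 2) $$ (x*4+y, x*4+y))" by (rule sum_split_mult)
  also have "\<dots> = (\<Sum>x<d. \<Sum>y<4. M $$ (x,x) * anc_zero 2 $$ (y,y))"
  proof (intro sum.cong refl)
    fix x y assume x: "x \<in> {..<d}" and y: "y \<in> {..<4::nat}"
    have "x*4+y < d*4" using x y by auto
    then show "kron M (anc_zero 2) $$ (x*4+y, x*4+y) = M $$ (x,x) * anc_zero 2 $$ (y,y)"
      using M y by (simp add: kron_index)
  qed
  also have "\<dots> = (\<Sum>x<d. M $$ (x,x))"
    by (simp add: anc_zero_def eval_nat_numeral)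
  also have "\<dots> = tr M" unfolding tr_def using M by simp
  finally show ?thesis .
qed

lemma ptrace_kron_a0: assumes M: "M \<in> carrier_mat (2^n) (2^n)" shows "ptrace_anc n 2 (kron M (anc_zero 2)) = M"
proof (rule eq_matI)
  fix i j assume "i < dim_row M" "j < dim_col M"
  then have i: "i < 2^n" and j: "j < 2^n" using M by auto
  have "ptrace_anc n 2 (kron M (anc_zero 2)) $$ (i,j) = (\<Sum>a<4. kron M (anc_zero 2) $$ (i * 4 + a, j * 4 + a))"
    unfolding ptrace_anc_def using i j by simp
  also have "\<dots> = (\<Sum>a<4. M $$ (i,j) * anc_zero 2 $$ (a,a))"
  proof (intro sum.cong refl)
    fix a assume a: "a \<in> {..<4::nat}"
    have "i*4+a < 2^n*4" "j*4+a < 2^n*4" using i j a by auto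
    then show "kron M (anc_zero 2) $$ (i * 4 + a, j * 4 + a) = M $$ (i,j) * anc_zero 2 $$ (a,a)"
      using M a by (simp add: kron_index)
  qed
  also have "\<dots> = M $$ (i,j)" by (simp add: anc_zero_def eval_nat_numeral)
  finally show "ptrace_anc n 2 (kron M (anc_zero 2)) $$ (i,j) = M $$ (i,j)" .
qed (use M in \<open>auto simp: ptrace_anc_def\<close>)

lemma density_conj: assumes d: "density n \<rho>" and uU: "unitary_mat n U" shows "density n (U * \<rho> * adj U)"
proof -
  have p: "psd n \<rho>" and t: "tr \<rho> = 1" using d by (auto simp: density_def)
  have r: "\<rho> \<in> carrier_mat n n" using p by (simp add: psd_def)
  have U: "U \<in> carrier_mat n n" using uU by (rule unitary_carrier)
  from psd_decomp[OF p] obtain Q r' where uQ: "unitary_mat n Q" and r'': "\<forall>k. r' k \<ge> 0"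
    and rho: "\<rho> = Q * dmat n (\<lambda>k. complex_of_real (r' k)) * adj Q" by blast
  have Q: "Q \<in> carrier_mat n n" using uQ by (rule unitary_carrier)
  have "U * \<rho> * adj U = (U * Q) * dmat n (\<lambda>k. complex_of_real (r' k)) * adj (U * Q)"
    unfolding rho using U Q by (simp add: adj_mult)
  moreover have "psd n ((U * Q) * dmat n (\<lambda>k. complex_of_real (r' k)) * adj (U * Q))"
    by (rule psd_of_decomp[OF unitary_mult[OF uU uQ] r''])
  ultimately have "psd n (U * \<rho> * adj U)" by simp
  moreover have "tr (U * \<rho> * adj U) = 1" using tr_conj[OF uU r] t by simp
  ultimately show ?thesis by (simp add: density_def)
qed

lemma psp_final_unf: "psp_final n 2 C1 C2 U Ks \<rho> =
  kron (1\<^sub>m (2^n)) (anc_zero 2) * (kron (1\<^sub>m (2^n)) (hpow 2) * layer2_full n 2 C2 *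
   apply_kraus (map (\<lambda>E. kron E (1\<^sub>m 4)) Ks)
     (kron U (1\<^sub>m 4) * layer1_full n 2 C1 * kron (1\<^sub>m (2^n)) (hpow 2) * kron \<rho> (anc_zero 2) *
      adj (kron U (1\<^sub>m 4) * layer1_full n 2 C1 * kron (1\<^sub>m (2^n)) (hpow 2))) *
   adj (kron (1\<^sub>m (2^n)) (hpow 2) * layer2_full n 2 C2)) * kron (1\<^sub>m (2^n)) (anc_zero 2)"
proof -
  have e4: "(2::nat)^2 = 4" by simp
  show ?thesis unfolding psp_final_def Let_def e4 ..
qed

lemma smult_conj: assumes U: "U \<in> carrier_mat d d" and r: "\<rho> \<in> carrier_mat d d"
  shows "(t \<cdot>\<^sub>m U) * \<rho> * adj (t \<cdot>\<^sub>m U) = (t * cnj t) \<cdot>\<^sub>m (U * \<rho> * adj U)"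
proof -
  have aU: "adj U \<in> carrier_mat d d" using U by auto
  have Ur: "U * \<rho> \<in> carrier_mat d d" using U r by (rule sq_mult)
  have "(t \<cdot>\<^sub>m U) * \<rho> * adj (t \<cdot>\<^sub>m U) = (t \<cdot>\<^sub>m (U * \<rho>)) * (cnj t \<cdot>\<^sub>m adj U)"
    unfolding adj_smult mult_smult_assoc_mat[OF U r] ..
  also have "\<dots> = t \<cdot>\<^sub>m ((U * \<rho>) * (cnj t \<cdot>\<^sub>m adj U))"
  proof -
    have c: "cnj t \<cdot>\<^sub>m adj U \<in> carrier_mat d d" using aU by simp
    show ?thesis by (rule mult_smult_assoc_mat[OF Ur c])
  qed
  also have "(U * \<rho>) * (cnj t \<cdot>\<^sub>m adj U) = cnj t \<cdot>\<^sub>m ((U * \<rho>) * adj U)"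
    by (rule mult_smult_distrib[OF Ur aU])
  also have "t \<cdot>\<^sub>m (cnj t \<cdot>\<^sub>m ((U * \<rho>) * adj U)) = (t * cnj t) \<cdot>\<^sub>m (U * \<rho> * adj U)"
    by (rule eq_matI) auto
  finally show ?thesis .
qed

lemma mult_cnj_self: "z * cnj z = complex_of_real ((cmod z)\<^sup>2)"
  by (metis complex_norm_square)

lemma psp_final_val:
  assumes uU: "unitary_mat (2^n) U" and r: "\<rho> \<in> carrier_mat (2^n) (2^n)"
    and w: "\<forall>E \<in> set Ks. weight_le1 n E"
  shows "\<exists>y::real. psp_final n 2 (C1c n U) (Vc n) U Ks \<rho> = kron (complex_of_real y \<cdot>\<^sub>m (U * \<rho> * adj U)) (anc_zero 2)"
proof -
  let ?d = "2^n" let ?D = "2^n * 4"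
  let ?I = "1\<^sub>m ?d"
  let ?P = "kron ?I (anc_zero 2)"
  let ?Hd = "kron ?I (hpow 2)"
  let ?L1 = "layer1_full n 2 (C1c n U)" let ?L2 = "layer2_full n 2 (Vc n)"
  let ?V1 = "kron U (1\<^sub>m 4) * ?L1 * ?Hd"
  let ?V2 = "?Hd * ?L2"
  let ?s0 = "kron \<rho> (anc_zero 2)"
  let ?M = "U * \<rho> * adj U"
  have U: "U \<in> carrier_mat ?d ?d" using uU by (rule unitary_carrier)
  have I: "?I \<in> carrier_mat ?d ?d" by simp
  have C1: "C1c n U 1 \<in> carrier_mat ?d ?d" "C1c n U 2 \<in> carrier_mat ?d ?d" using C1c_carrier[OF U] by auto
  have C2: "Vc n 1 \<in> carrier_mat ?d ?d" "Vc n 2 \<in> carrier_mat ?d ?d" by auto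
  have L1c: "?L1 \<in> carrier_mat ?D ?D" unfolding layer1_eq[OF C1] by (rule sq_mult) (use C1 in simp_all)
  have L2c: "?L2 \<in> carrier_mat ?D ?D" unfolding layer2_eq[OF C2] by (rule sq_mult) (use C2 in simp_all)
  have kU: "kron U (1\<^sub>m 4) \<in> carrier_mat ?D ?D" using kron_carrier[OF U one_carrier_mat] by simp
  have Pc: "?P \<in> carrier_mat ?D ?D" using kron_carrier[OF I a0_carrier] by simp
  have Hc: "?Hd \<in> carrier_mat ?D ?D" using kron_carrier[OF I HH_carrier] by simp
  have V1c: "?V1 \<in> carrier_mat ?D ?D" by (intro sq_mult kU L1c Hc)
  have V2c: "?V2 \<in> carrier_mat ?D ?D" by (intro sq_mult L2c Hc)
  have s0c: "?s0 \<in> carrier_mat ?D ?D" using kron_carrier[OF r a0_carrier] by simp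
  have hP: "adj ?P = ?P" by (simp add: adj_kron F7)
  have s0: "?P * ?s0 * ?P = ?s0" using r by (simp del: massoc add: kron_mult F7)
  have Mc: "?M \<in> carrier_mat ?d ?d" using U r by (intro sq_mult adj_carrier)
  have val: "\<forall>E\<in>set Ks. kron E (1\<^sub>m 4) \<in> carrier_mat ?D ?D \<and> (\<exists>y. (?P * ?V2 * kron E (1\<^sub>m 4) * ?V1 * ?P) * ?s0 * adj (?P * ?V2 * kron E (1\<^sub>m 4) * ?V1 * ?P) = kron ((complex_of_real y) \<cdot>\<^sub>m ?M) (anc_zero 2))"
  proof
    fix E assume "E \<in> set Ks"
    with w obtain q A where q: "q < n" and A: "A \<in> carrier_mat 2 2" and EA: "E = on_qubit n q A"
      unfolding weight_le1_def by blast
    have E: "E \<in> carrier_mat ?d ?d" unfolding EA using q A by simp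
    let ?t = "(A $$ (0,0) + A $$ (1,1)) / 2"
    have W: "?P * ?V2 * kron E (1\<^sub>m 4) * ?V1 * ?P = kron (?t \<cdot>\<^sub>m U) (anc_zero 2)"
      using W_a0[OF C1 C2 E U] Ymat_val[OF uU q A] unfolding EA by simp
    have tU: "?t \<cdot>\<^sub>m U \<in> carrier_mat ?d ?d" using U by simp
    have "kron (?t \<cdot>\<^sub>m U) (anc_zero 2) * ?s0 * adj (kron (?t \<cdot>\<^sub>m U) (anc_zero 2))
        = kron ((?t \<cdot>\<^sub>m U) * \<rho> * adj (?t \<cdot>\<^sub>m U)) (anc_zero 2 * anc_zero 2 * adj (anc_zero 2))"
      unfolding adj_kron using U r by (simp del: massoc add: kron_mult)
    also have "(?t \<cdot>\<^sub>m U) * \<rho> * adj (?t \<cdot>\<^sub>m U) = (?t * cnj ?t) \<cdot>\<^sub>m ?M"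
      by (rule smult_conj[OF U r])
    also have "?t * cnj ?t = complex_of_real ((cmod ?t)\<^sup>2)" by (rule mult_cnj_self)
    finally have X: "kron (?t \<cdot>\<^sub>m U) (anc_zero 2) * ?s0 * adj (kron (?t \<cdot>\<^sub>m U) (anc_zero 2)) = kron (complex_of_real ((cmod ?t)\<^sup>2) \<cdot>\<^sub>m ?M) (anc_zero 2)"
      by (simp only: F7)
    have kc: "kron E (1\<^sub>m 4) \<in> carrier_mat ?D ?D" using kron_carrier[OF E one_carrier_mat] by simp
    show "kron E (1\<^sub>m 4) \<in> carrier_mat ?D ?D \<and> (\<exists>y. (?P * ?V2 * kron E (1\<^sub>m 4) * ?V1 * ?P) * ?s0 * adj (?P * ?V2 * kron E (1\<^sub>m 4) * ?V1 * ?P) = kron ((complex_of_real y) \<cdot>\<^sub>m ?M) (anc_zero 2))"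
      unfolding W by (intro conjI kc exI[of _ "(cmod ?t)\<^sup>2"] X)
  qed
  from kraus_sum[OF Pc V1c V2c s0c hP s0 Mc a0_carrier refl val]
  obtain y where "?P * (?V2 * apply_kraus (map (\<lambda>E. kron E (1\<^sub>m 4)) Ks) (?V1 * ?s0 * adj ?V1) * adj ?V2) * ?P = kron (complex_of_real y \<cdot>\<^sub>m ?M) (anc_zero 2)"
    by blast
  then show ?thesis unfolding psp_final_unf by blast
qed

theorem lemma1:
  fixes n :: nat and U \<rho> :: "complex mat" and Ks :: "complex mat list"
  assumes "n \<ge> 1"
    and "unitary_mat (2^n) U"
    and "density (2^n) \<rho>"
    and "kraus_channel (2^n) Ks"
    and "\<forall>E \<in> set Ks. weight_le1 n E"
  shows "\<exists>C1 C2 :: nat \<Rightarrow> complex mat.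
      (\<forall>k \<in> {1, 2}. unitary_mat (2^n) (C1 k) \<and> unitary_mat (2^n) (C2 k) \<and> C2 k * U * C1 k = U)
    \<and> (psp_prob n 2 C1 C2 U Ks \<rho> \<noteq> 0 \<longrightarrow>
         fidelity (psp_state n 2 C1 C2 U Ks \<rho>) (U * \<rho> * adj U) = 1)
    \<and> (\<exists>g1 g2 :: gate list.
         (\<forall>g \<in> set g1 \<union> set g2. gate_ok (n + 2) g)
       \<and> circuit_mat (n + 2) g1 = ctrl n 2 1 (C2 1)
       \<and> circuit_mat (n + 2) g2 = ctrl n 2 2 (C2 2)
       \<and> cnot_count g1 + cnot_count g2 = 2 * n)"
proof -
  have uU: "unitary_mat (2^n) U" by fact
  have U: "U \<in> carrier_mat (2^n) (2^n)" using uU by (rule unitary_carrier)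
  have dens: "density (2^n) \<rho>" by fact
  have r: "\<rho> \<in> carrier_mat (2^n) (2^n)" using dens by (simp add: density_def psd_def)
  have w: "\<forall>E \<in> set Ks. weight_le1 n E" by fact
  let ?C1 = "C1c n U" let ?C2 = "Vc n"
  have P1: "\<forall>k \<in> {1, 2}. unitary_mat (2^n) (?C1 k) \<and> unitary_mat (2^n) (?C2 k) \<and> ?C2 k * U * ?C1 k = U"
  proof (intro ballI conjI)
    fix k :: nat
    show "unitary_mat (2^n) (?C1 k)" unfolding C1c_def
      by (intro unitary_mult unitary_adj uU Vc_unitary)
    show "unitary_mat (2^n) (?C2 k)" by (rule Vc_unitary)
    have c2: "\<And>X. dim_row X = 2^n \<Longrightarrow> U * (adj U * X) = X" by (rule unitary_cancel2[OF uU])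
    have c2': "\<And>X. dim_row X = 2^n \<Longrightarrow> Vc n k * (adj (Vc n k) * X) = X" by (rule unitary_cancel2[OF Vc_unitary])
    show "?C2 k * U * ?C1 k = U" unfolding C1c_def using U by (simp add: c2 c2')
  qed
  have P2: "psp_prob n 2 ?C1 ?C2 U Ks \<rho> \<noteq> 0 \<longrightarrow> fidelity (psp_state n 2 ?C1 ?C2 U Ks \<rho>) (U * \<rho> * adj U) = 1"
  proof
    assume nz: "psp_prob n 2 ?C1 ?C2 U Ks \<rho> \<noteq> 0"
    let ?M = "U * \<rho> * adj U"
    have Mc: "?M \<in> carrier_mat (2^n) (2^n)" using U r by (intro sq_mult adj_carrier)
    from psp_final_val[OF uU r w] obtain y where y: "psp_final n 2 ?C1 ?C2 U Ks \<rho> = kron (complex_of_real y \<cdot>\<^sub>m ?M) (anc_zero 2)" by blast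
    have yM: "complex_of_real y \<cdot>\<^sub>m ?M \<in> carrier_mat (2^n) (2^n)" using Mc by simp
    have trM: "tr ?M = 1" using tr_conj[OF uU r] dens by (simp add: density_def)
    have pr: "psp_prob n 2 ?C1 ?C2 U Ks \<rho> = complex_of_real y"
      unfolding psp_prob_def y tr_kron_a0[OF yM] tr_smult[OF Mc] trM by simp
    have y0: "complex_of_real y \<noteq> 0" using nz pr by simp
    have st: "psp_state n 2 ?C1 ?C2 U Ks \<rho> = ?M"
    proof -
      have "psp_state n 2 ?C1 ?C2 U Ks \<rho> = (1 / complex_of_real y) \<cdot>\<^sub>m (complex_of_real y \<cdot>\<^sub>m ?M)"
        unfolding psp_state_def pr y ptrace_kron_a0[OF yM] ..
      also have "\<dots> = ?M" using y0 by (intro eq_matI) auto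
      finally show ?thesis .
    qed
    show "fidelity (psp_state n 2 ?C1 ?C2 U Ks \<rho>) (U * \<rho> * adj U) = 1"
      unfolding st by (rule fidelity_self[OF density_conj[OF dens uU]])
  qed
  have P3: "\<exists>g1 g2 :: gate list.
         (\<forall>g \<in> set g1 \<union> set g2. gate_ok (n + 2) g)
       \<and> circuit_mat (n + 2) g1 = ctrl n 2 1 (?C2 1)
       \<and> circuit_mat (n + 2) g2 = ctrl n 2 2 (?C2 2)
       \<and> cnot_count g1 + cnot_count g2 = 2 * n"
  proof (intro exI conjI)
    let ?g1 = "concat (map (gl1 n) [0..<n])" let ?g2 = "concat (map (gl2 n) [0..<n])"
    have h1: "circuit_mat (n+2) ?g1 = blk 1 (kron (tp n pauliX) (1\<^sub>m (2^(n-n)))) (1\<^sub>m (2^n)) \<and> (\<forall>g\<in>set ?g1. gate_ok (n+2) g)"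
      by (rule circ_tp[of 1 pauliX n "gl1 n" n, OF _ _ gl1_ok]) auto
    have h2: "circuit_mat (n+2) ?g2 = blk 2 (kron (tp n Ym) (1\<^sub>m (2^(n-n)))) (1\<^sub>m (2^n)) \<and> (\<forall>g\<in>set ?g2. gate_ok (n+2) g)"
      by (rule circ_tp[of 2 Ym n "gl2 n" n, OF _ _ gl2_ok]) auto
    show "\<forall>g \<in> set ?g1 \<union> set ?g2. gate_ok (n + 2) g" using h1 h2 by blast
    show "circuit_mat (n + 2) ?g1 = ctrl n 2 1 (?C2 1)" using h1 by (simp add: ctrl_blk Vc_def)
    show "circuit_mat (n + 2) ?g2 = ctrl n 2 2 (?C2 2)" using h2 by (simp add: ctrl_blk Vc_def)
    have "cnot_count ?g1 = n" by (rule cnot_count_concat) (simp add: gl1_def cnot_count_def is_cnot_def)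
    moreover have "cnot_count ?g2 = n" by (rule cnot_count_concat) (simp add: gl2_def cnot_count_def is_cnot_def)
    ultimately show "cnot_count ?g1 + cnot_count ?g2 = 2 * n" by simp
  qed
  show ?thesis using P1 P2 P3 by blast
qed

end
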